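(* Let $\mathbf{k}$ be a commutative ring and $H$ a commutative connected graded $\mathbf{k}$-Hopf algebra. Let $\beta_H:H\to H\otimes\mathrm{QSym}_{\mathbf{k}}$ be defined by $\beta_H(h)=\sum_{\alpha\in\mathrm{Comp}}\xi_\alpha(h)\otimes M_\alpha$. (a) $\beta_H$ is a $\mathbf{k}$-algebra homomorphism and a graded $(\mathbf{k},H)$-coalgebra homomorphism. (b) $(\mathrm{id}_H\otimes\varepsilon_P)\circ\beta_H=\mathrm{id}_H$ (identifying $H\otimes\mathbf{k}$ with $H$). (c) $(\beta_H\otimes\mathrm{id}_{\mathrm{QSym}_{\mathbf{k}}})\circ\beta_H=(\mathrm{id}_H\otimes\Delta'_P)\circ\beta_H$ as maps $H\to H\otimes\mathrm{QSym}_{\mathbf{k}}\otimes\mathrm{QSym}_{\mathbf{k}}$. (d) If the $\mathbf{k}$-coalgebra $H$ is cocommutative, then $\beta_H(H)\subseteq H\otimes\Lambda_{\mathbf{k}}$, where $\Lambda_{\mathbf{k}}\subseteq\mathrm{QSym}_{\mathbf{k}}$ is the algebra of symmetric functions.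
   Context: Unadorned tensor products are over $\mathbf{k}$; graded means $\mathbb{N}$-graded, connected means $H_0\cong\mathbf{k}$ via the counit. A composition is a finite sequence of positive integers; $\mathrm{Comp}$ the set of compositions. $\mathrm{QSym}_{\mathbf{k}}\subseteq\mathbf{k}[[x_1,x_2,\ldots]]$ is the Hopf algebra of quasisymmetric functions with monomial basis $M_\alpha=\sum_{1\le i_1<\cdots<i_\ell}x_{i_1}^{\alpha_1}\cdots x_{i_\ell}^{\alpha_\ell}$ (for $\alpha=(\alpha_1,\ldots,\alpha_\ell)$, degree $\alpha_1+\cdots+\alpha_\ell$), with $\Delta(M_{(b_1,\ldots,b_\ell)})=\sum_{i=0}^\ell M_{(b_1,\ldots,b_i)}\otimes M_{(b_{i+1},\ldots,b_\ell)}$; $\varepsilon_P:\mathrm{QSym}_{\mathbf{k}}\to\mathbf{k}$, $f\mapsto f(1,0,0,\ldots)$. For $\alpha=(a_1,\ldots,a_k)$, $\xi_\alpha=m^{(k-1)}\circ\pi_\alpha\circ\Delta^{(k-1)}:H\to H$, where $\Delta^{(k-1)}:H\to H^{\otimes k}$ is the iterated comultiplication ($\Delta^{(-1)}=\varepsilon$, $\Delta^{(0)}=\mathrm{id}$, $\Delta^{(k)}=(\mathrm{id}\otimes\Delta^{(k-1)})\circ\Delta$), $m^{(k-1)}:H^{\otimes k}\to H$ is $h_1\otimes\cdots\otimes h_k\mapsto h_1\cdots h_k$ ($m^{(-1)}$ the unit), and $\pi_\alpha=\pi_{a_1}\otimes\cdots\otimes\pi_{a_k}$ with $\pi_n:H\to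 H$ the projection onto $H_n$. The sum defining $\beta_H(h)$ is finite. Second comultiplication: for $A=(a_{i,j})\in\mathbb{N}^{u\times v}$, $\mathrm{column}\,A$ is the $v$-tuple of column sums, $\mathrm{row}\,A$ the $u$-tuple of row sums, $\mathrm{read}\,A=(a_{1,1},\ldots,a_{1,v},\ldots,a_{u,1},\ldots,a_{u,v})$; $A$ is reduced if no row and no column is zero; $\mathbb{N}^{\bullet,\bullet}_{\mathrm{red}}$ is the set of all reduced matrices of all sizes; $w^{\mathrm{red}}$ is $w$ with zero entries removed. $\Delta_P$ is the $\mathbf{k}$-linear map $M_\gamma\mapsto\sum_{A\in\mathbb{N}^{\bullet,\bullet}_{\mathrm{red}},(\mathrm{read}\,A)^{\mathrm{red}}=\gamma}M_{\mathrm{row}\,A}\otimes M_{\mathrm{column}\,A}$, and $\Delta'_P=\tau\circ\Delta_P$ with $\tau$ the twist $x\otimes y\mapsto y\otimes x$. Extension of scalars: $H\otimes\mathrm{QSym}_{\mathbf{k}}$ is regarded as an $H$-module via $a(b\otimes q)=ab\otimes q$, an $H$-algebra, and an $H$-coalgebra with comultiplication $\mathrm{id}_H\otimes\Delta$ (identifying $H\otimes(Q\otimes Q)\cong(H\otimes Q)\otimes_H(H\otimes Q)$) and counit $\mathrm{id}_H\otimes\varepsilon$, graded by $(H\otimes\mathrm{QSym}_{\mathbf{k}})_n=H\otimes(\mathrm{QSym}_{\mathbf{k}})_n$ (the grading and coalgebra structure of the left factor $H$ are ignored). Also $H\otimes H$ (scalars extended to the left factor) is an $H$-coalgebra in the same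 way. A $\mathbf{k}$-linear $f:H\to G$ into an $H$-coalgebra $G$ is a $(\mathbf{k},H)$-coalgebra homomorphism if $f^\sharp:H\otimes H\to G$, $a\otimes h\mapsto af(h)$, is an $H$-coalgebra homomorphism; graded means $\beta_H(H_n)\subseteq H\otimes(\mathrm{QSym}_{\mathbf{k}})_n$. *)

theory Defs
  imports Main HOL.Modules "HOL-Library.Poly_Mapping" "HOL-Library.Multiset"
begin

text \<open>The Hopf algebra H is a type 'h::comm_ring_1
 (its commutative ring structure) with a k-module structure sc.  Elements of the k-tensor product
 H (x) H are represented by finitely supported formal k-linear combinations of pairs, i.e. by
 elements of ('h * 'h) =>0 'k; two representatives denote the same tensor iff their difference
 lies in the k-submodule tens2 sc generated by the bilinearity relations.\<close>

inductive_set tens2 :: "('k::comm_ring_1 \<Rightarrow> 'h::ab_group_add \<Rightarrow> 'h) \<Rightarrow> (('h \<times> 'h) \<Rightarrow>\<^sub>0 'k) set"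
  for sc where
  t2_zero: "0 \<in> tens2 sc"
| t2_addl: "Poly_Mapping.single (x + x', y) 1 - Poly_Mapping.single (x, y) 1
              - Poly_Mapping.single (x', y) 1 \<in> tens2 sc"
| t2_addr: "Poly_Mapping.single (x, y + y') 1 - Poly_Mapping.single (x, y) 1
              - Poly_Mapping.single (x, y') 1 \<in> tens2 sc"
| t2_scl: "Poly_Mapping.single (sc c x, y) 1 - Poly_Mapping.single (x, y) c \<in> tens2 sc"
| t2_scr: "Poly_Mapping.single (x, sc c y) 1 - Poly_Mapping.single (x, y) c \<in> tens2 sc"
| t2_add: "p \<in> tens2 sc \<Longrightarrow> q \<in> tens2 sc \<Longrightarrow> p + q \<in> tens2 sc"
| t2_smul: "p \<in> tens2 sc \<Longrightarrow> Poly_Mapping.map ((*) c) p \<in> tens2 sc"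

inductive_set tens3 :: "('k::comm_ring_1 \<Rightarrow> 'h::ab_group_add \<Rightarrow> 'h) \<Rightarrow> (('h \<times> 'h \<times> 'h) \<Rightarrow>\<^sub>0 'k) set"
  for sc where
  t3_zero: "0 \<in> tens3 sc"
| t3_add1: "Poly_Mapping.single (x + x', y, z) 1 - Poly_Mapping.single (x, y, z) 1
              - Poly_Mapping.single (x', y, z) 1 \<in> tens3 sc"
| t3_add2: "Poly_Mapping.single (x, y + y', z) 1 - Poly_Mapping.single (x, y, z) 1
              - Poly_Mapping.single (x, y', z) 1 \<in> tens3 sc"
| t3_add3: "Poly_Mapping.single (x, y, z + z') 1 - Poly_Mapping.single (x, y, z) 1
              - Poly_Mapping.single (x, y, z') 1 \<in> tens3 sc"
| t3_sc1: "Poly_Mapping.single (sc c x, y, z) 1 - Poly_Mapping.single (x, y, z) c \<in> tens3 sc"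
| t3_sc2: "Poly_Mapping.single (x, sc c y, z) 1 - Poly_Mapping.single (x, y, z) c \<in> tens3 sc"
| t3_sc3: "Poly_Mapping.single (x, y, sc c z) 1 - Poly_Mapping.single (x, y, z) c \<in> tens3 sc"
| t3_add: "p \<in> tens3 sc \<Longrightarrow> q \<in> tens3 sc \<Longrightarrow> p + q \<in> tens3 sc"
| t3_smul: "p \<in> tens3 sc \<Longrightarrow> Poly_Mapping.map ((*) c) p \<in> tens3 sc"

definition teq2 :: "('k::comm_ring_1 \<Rightarrow> 'h::ab_group_add \<Rightarrow> 'h) \<Rightarrow> (('h \<times> 'h) \<Rightarrow>\<^sub>0 'k) \<Rightarrow> (('h \<times> 'h) \<Rightarrow>\<^sub>0 'k) \<Rightarrow> bool"
  where "teq2 sc s t \<longleftrightarrow> s - t \<in> tens2 sc"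

definition teq3 :: "('k::comm_ring_1 \<Rightarrow> 'h::ab_group_add \<Rightarrow> 'h) \<Rightarrow> (('h \<times> 'h \<times> 'h) \<Rightarrow>\<^sub>0 'k) \<Rightarrow> (('h \<times> 'h \<times> 'h) \<Rightarrow>\<^sub>0 'k) \<Rightarrow> bool"
  where "teq3 sc s t \<longleftrightarrow> s - t \<in> tens3 sc"

definition tlift2 :: "('k::comm_ring_1 \<Rightarrow> 'h \<Rightarrow> 'h) \<Rightarrow> ('h \<Rightarrow> 'h \<Rightarrow> 'h::comm_ring_1)
     \<Rightarrow> (('h \<times> 'h) \<Rightarrow>\<^sub>0 'k) \<Rightarrow> 'h" where
  "tlift2 sc b t = (\<Sum>p\<in>Poly_Mapping.keys t. sc (Poly_Mapping.lookup t p) (b (fst p) (snd p)))"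

definition tmult2 :: "(('h::comm_ring_1 \<times> 'h) \<Rightarrow>\<^sub>0 'k::comm_ring_1) \<Rightarrow> (('h \<times> 'h) \<Rightarrow>\<^sub>0 'k) \<Rightarrow> (('h \<times> 'h) \<Rightarrow>\<^sub>0 'k)" where
  "tmult2 s t = (\<Sum>p\<in>Poly_Mapping.keys s. \<Sum>q\<in>Poly_Mapping.keys t.
       Poly_Mapping.single (fst p * fst q, snd p * snd q) (Poly_Mapping.lookup s p * Poly_Mapping.lookup t q))"

definition tswap2 :: "(('h \<times> 'h) \<Rightarrow>\<^sub>0 'k::comm_ring_1) \<Rightarrow> (('h \<times> 'h) \<Rightarrow>\<^sub>0 'k)" where
  "tswap2 t = (\<Sum>p\<in>Poly_Mapping.keys t. Poly_Mapping.single (snd p, fst p) (Poly_Mapping.lookup t p))"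

definition comul_left :: "('h \<Rightarrow> ('h \<times> 'h) \<Rightarrow>\<^sub>0 'k::comm_ring_1) \<Rightarrow> (('h \<times> 'h) \<Rightarrow>\<^sub>0 'k) \<Rightarrow> (('h \<times> 'h \<times> 'h) \<Rightarrow>\<^sub>0 'k)" where
  "comul_left D t = (\<Sum>p\<in>Poly_Mapping.keys t. \<Sum>q\<in>Poly_Mapping.keys (D (fst p)).
       Poly_Mapping.single (fst q, snd q, snd p) (Poly_Mapping.lookup t p * Poly_Mapping.lookup (D (fst p)) q))"

definition comul_right :: "('h \<Rightarrow> ('h \<times> 'h) \<Rightarrow>\<^sub>0 'k::comm_ring_1) \<Rightarrow> (('h \<times> 'h) \<Rightarrow>\<^sub>0 'k) \<Rightarrow> (('h \<times> 'h \<times> 'h) \<Rightarrow>\<^sub>0 'k)" where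
  "comul_right D t = (\<Sum>p\<in>Poly_Mapping.keys t. \<Sum>q\<in>Poly_Mapping.keys (D (snd p)).
       Poly_Mapping.single (fst p, fst q, snd q) (Poly_Mapping.lookup t p * Poly_Mapping.lookup (D (snd p)) q))"

definition klinear :: "('k::comm_ring_1 \<Rightarrow> 'h::ab_group_add \<Rightarrow> 'h) \<Rightarrow> ('h \<Rightarrow> 'h) \<Rightarrow> bool" where
  "klinear sc f \<longleftrightarrow> (\<forall>x y. f (x + y) = f x + f y) \<and> (\<forall>c x. f (sc c x) = sc c (f x))"

definition ksubmodule :: "('k::comm_ring_1 \<Rightarrow> 'h::ab_group_add \<Rightarrow> 'h) \<Rightarrow> 'h set \<Rightarrow> bool" where
  "ksubmodule sc V \<longleftrightarrow> 0 \<in> V \<and> (\<forall>x\<in>V. \<forall>y\<in>V. x + y \<in> V) \<and> (\<forall>c. \<forall>x\<in>V. sc c x \<in> V)"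

definition graded_decomp :: "('k::comm_ring_1 \<Rightarrow> 'h::ab_group_add \<Rightarrow> 'h) \<Rightarrow> (nat \<Rightarrow> 'h set) \<Rightarrow> bool" where
  "graded_decomp sc Hn \<longleftrightarrow> (\<forall>n. ksubmodule sc (Hn n)) \<and>
     (\<forall>x. \<exists>!f. (\<forall>n. f n \<in> Hn n) \<and> finite {n. f n \<noteq> 0} \<and> x = (\<Sum>n\<in>{n. f n \<noteq> 0}. f n))"

definition proj :: "(nat \<Rightarrow> 'h::ab_group_add set) \<Rightarrow> nat \<Rightarrow> 'h \<Rightarrow> 'h" where
  "proj Hn n x = (THE f. (\<forall>m. f m \<in> Hn m) \<and> finite {m. f m \<noteq> 0} \<and> x = (\<Sum>m\<in>{m. f m \<noteq> 0}. f m)) n"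

text \<open>Data: k-module structure sc on the commutative ring 'h, grading Hn, comultiplication D
 (with values representatives of elements of H (x) H), counit e.\<close>
definition comm_conn_graded_hopf ::
  "('k::comm_ring_1 \<Rightarrow> 'h::comm_ring_1 \<Rightarrow> 'h) \<Rightarrow> (nat \<Rightarrow> 'h set) \<Rightarrow> ('h \<Rightarrow> ('h \<times> 'h) \<Rightarrow>\<^sub>0 'k) \<Rightarrow> ('h \<Rightarrow> 'k) \<Rightarrow> bool"
where
  "comm_conn_graded_hopf sc Hn D e \<longleftrightarrow>
     \<comment> \<open>commutative k-algebra\<close>
     module sc \<and> (\<forall>c x y. sc c (x * y) = sc c x * y) \<and>
     \<comment> \<open>grading, compatible with the algebra structure\<close>
     graded_decomp sc Hn \<and> 1 \<in> Hn 0 \<and> (\<forall>i j x y. x \<in> Hn i \<longrightarrow> y \<in> Hn j \<longrightarrow> x * y \<in> Hn (i + j)) \<and>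
     \<comment> \<open>k-linearity of comultiplication and counit\<close>
     (\<forall>x y. teq2 sc (D (x + y)) (D x + D y)) \<and>
     (\<forall>c x. teq2 sc (D (sc c x)) (Poly_Mapping.map ((*) c) (D x))) \<and>
     (\<forall>x y. e (x + y) = e x + e y) \<and> (\<forall>c x. e (sc c x) = c * e x) \<and>
     \<comment> \<open>coalgebra axioms\<close>
     (\<forall>x. teq3 sc (comul_left D (D x)) (comul_right D (D x))) \<and>
     (\<forall>x. tlift2 sc (\<lambda>a b. sc (e a) b) (D x) = x) \<and>
     (\<forall>x. tlift2 sc (\<lambda>a b. sc (e b) a) (D x) = x) \<and>
     \<comment> \<open>bialgebra axioms\<close>
     (\<forall>x y. teq2 sc (D (x * y)) (tmult2 (D x) (D y))) \<and>
     teq2 sc (D 1) (Poly_Mapping.single (1, 1) 1) \<and>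
     (\<forall>x y. e (x * y) = e x * e y) \<and> e 1 = 1 \<and>
     \<comment> \<open>graded coalgebra\<close>
     (\<forall>n x. x \<in> Hn n \<longrightarrow> (\<exists>t. teq2 sc (D x) t \<and>
         (\<forall>p\<in>Poly_Mapping.keys t. \<exists>i j. i + j = n \<and> fst p \<in> Hn i \<and> snd p \<in> Hn j))) \<and>
     (\<forall>n x. n > 0 \<longrightarrow> x \<in> Hn n \<longrightarrow> e x = 0) \<and>
     \<comment> \<open>connected: H_0 isomorphic to k via the counit\<close>
     bij_betw e (Hn 0) UNIV \<and>
     \<comment> \<open>antipode\<close>
     (\<exists>S. klinear sc S \<and>
        (\<forall>x. tlift2 sc (\<lambda>a b. S a * b) (D x) = sc (e x) 1) \<and>
        (\<forall>x. tlift2 sc (\<lambda>a b. a * S b) (D x) = sc (e x) 1))"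

definition cocommutative :: "('k::comm_ring_1 \<Rightarrow> 'h::comm_ring_1 \<Rightarrow> 'h) \<Rightarrow> ('h \<Rightarrow> ('h \<times> 'h) \<Rightarrow>\<^sub>0 'k) \<Rightarrow> bool" where
  "cocommutative sc D \<longleftrightarrow> (\<forall>x. teq2 sc (tswap2 (D x)) (D x))"

definition conv :: "('k::comm_ring_1 \<Rightarrow> 'h::comm_ring_1 \<Rightarrow> 'h) \<Rightarrow> ('h \<Rightarrow> ('h \<times> 'h) \<Rightarrow>\<^sub>0 'k)
    \<Rightarrow> ('h \<Rightarrow> 'h) \<Rightarrow> ('h \<Rightarrow> 'h) \<Rightarrow> 'h \<Rightarrow> 'h" where
  "conv sc D f g x = tlift2 sc (\<lambda>a b. f a * g b) (D x)"

text \<open>xi_alpha = m^(k-1) o pi_alpha o Delta^(k-1); with Delta^(k) = (id (x) Delta^(k-1)) o Delta this is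
 xi_() = unit o counit, xi_(a) = pi_a, xi_(a,b,...) = m o (pi_a (x) xi_(b,...)) o Delta.\<close>
fun xi :: "('k::comm_ring_1 \<Rightarrow> 'h::comm_ring_1 \<Rightarrow> 'h) \<Rightarrow> (nat \<Rightarrow> 'h set) \<Rightarrow> ('h \<Rightarrow> ('h \<times> 'h) \<Rightarrow>\<^sub>0 'k)
    \<Rightarrow> ('h \<Rightarrow> 'k) \<Rightarrow> nat list \<Rightarrow> 'h \<Rightarrow> 'h" where
  "xi sc Hn D e [] = (\<lambda>x. sc (e x) 1)"
| "xi sc Hn D e [a] = proj Hn a"
| "xi sc Hn D e (a # b # rest) = conv sc D (proj Hn a) (xi sc Hn D e (b # rest))"

definition is_comp :: "nat list \<Rightarrow> bool" where
  "is_comp \<alpha> \<longleftrightarrow> (\<forall>x\<in>set \<alpha>. 0 < x)"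

text \<open>Since QSym is k-free on the M_alpha, an element of H (x) QSym is written uniquely as
 sum_alpha u(alpha) (x) M_alpha; we represent it by the coefficient function u (zero off
 compositions).  Similarly H (x) QSym (x) QSym by functions on pairs of compositions.\<close>

definition betaH :: "('k::comm_ring_1 \<Rightarrow> 'h::comm_ring_1 \<Rightarrow> 'h) \<Rightarrow> (nat \<Rightarrow> 'h set) \<Rightarrow> ('h \<Rightarrow> ('h \<times> 'h) \<Rightarrow>\<^sub>0 'k)
    \<Rightarrow> ('h \<Rightarrow> 'k) \<Rightarrow> 'h \<Rightarrow> nat list \<Rightarrow> 'h" where
  "betaH sc Hn D e h \<alpha> = (if is_comp \<alpha> then xi sc Hn D e \<alpha> h else 0)"

text \<open>Quasi-shuffle (stuffle) product: M_alpha M_beta = sum over gamma in stuffle alpha beta of M_gamma.\<close>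
fun stuffle :: "nat list \<Rightarrow> nat list \<Rightarrow> nat list multiset" where
  "stuffle [] ys = {#ys#}"
| "stuffle xs [] = {#xs#}"
| "stuffle (x # xs) (y # ys) =
     image_mset ((#) x) (stuffle xs (y # ys)) + image_mset ((#) y) (stuffle (x # xs) ys)
     + image_mset ((#) (x + y)) (stuffle xs ys)"

definition qprod :: "(nat list \<Rightarrow> 'h::comm_ring_1) \<Rightarrow> (nat list \<Rightarrow> 'h) \<Rightarrow> nat list \<Rightarrow> 'h" where
  "qprod u v \<gamma> = (\<Sum>p\<in>{(\<alpha>, \<beta>). is_comp \<alpha> \<and> is_comp \<beta> \<and> sum_list \<alpha> + sum_list \<beta> = sum_list \<gamma>}.
      of_nat (count (stuffle (fst p) (snd p)) \<gamma>) * (u (fst p) * v (snd p)))"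

definition qone :: "nat list \<Rightarrow> 'h::comm_ring_1" where
  "qone \<alpha> = (if \<alpha> = [] then 1 else 0)"

text \<open>Comultiplication id_H (x) Delta of H (x) QSym into H (x) QSym (x) QSym:
 Delta(M_gamma) = sum of deconcatenations.\<close>
definition qcomul :: "(nat list \<Rightarrow> 'h::comm_ring_1) \<Rightarrow> nat list \<times> nat list \<Rightarrow> 'h" where
  "qcomul u p = (if is_comp (fst p) \<and> is_comp (snd p) then u (fst p @ snd p) else 0)"

definition qcounit :: "(nat list \<Rightarrow> 'h::comm_ring_1) \<Rightarrow> 'h" where
  "qcounit u = u []"

text \<open>id_H (x) epsilon_P, epsilon_P(M_alpha) = M_alpha(1,0,0,...) = (1 if length alpha <= 1, else 0).\<close>
definition qepsP :: "(nat list \<Rightarrow> 'h::comm_ring_1) \<Rightarrow> 'h" where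
  "qepsP u = (\<Sum>\<alpha>\<in>{\<alpha>. u \<alpha> \<noteq> 0}. if length \<alpha> \<le> 1 then u \<alpha> else 0)"

text \<open>Matrices in N^{u x v}: lists of u rows, each of length v.\<close>
definition colsums :: "nat \<Rightarrow> nat list list \<Rightarrow> nat list" where
  "colsums v A = map (\<lambda>j. sum_list (map (\<lambda>r. r ! j) A)) [0..<v]"

definition reduced_mat :: "nat \<Rightarrow> nat list list \<Rightarrow> bool" where
  "reduced_mat v A \<longleftrightarrow> (\<forall>r\<in>set A. length r = v) \<and> (\<forall>r\<in>set A. \<exists>x\<in>set r. x \<noteq> 0)
      \<and> (\<forall>j<v. \<exists>r\<in>set A. r ! j \<noteq> 0)"

definition red_mats :: "nat list \<Rightarrow> nat list \<Rightarrow> nat list list set" where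
  "red_mats \<alpha> \<gamma> = {A. reduced_mat (length \<alpha>) A \<and> map sum_list A = \<gamma> \<and> colsums (length \<alpha>) A = \<alpha>}"

text \<open>(id_H (x) Delta'_P) u, Delta'_P = tau o Delta_P, as coefficient function: the coefficient of
 M_alpha (x) M_gamma is the sum over reduced A with column A = alpha, row A = gamma of
 u((read A)^red).\<close>
definition qDeltaP' :: "(nat list \<Rightarrow> 'h::comm_ring_1) \<Rightarrow> nat list \<times> nat list \<Rightarrow> 'h" where
  "qDeltaP' u p = (\<Sum>A\<in>red_mats (fst p) (snd p). u (filter (\<lambda>x. x \<noteq> 0) (concat A)))"

text \<open>H (x) Lambda inside H (x) QSym: elements sum_lambda c_lambda (x) m_lambda, where
 m_lambda = sum of M_alpha over the rearrangements alpha of the partition lambda.\<close>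
definition in_H_Lambda :: "(nat list \<Rightarrow> 'h::comm_ring_1) \<Rightarrow> bool" where
  "in_H_Lambda u \<longleftrightarrow> (\<exists>c. \<forall>\<alpha>. is_comp \<alpha> \<longrightarrow> u \<alpha> = c (mset \<alpha>))"

definition fsharp :: "('k::comm_ring_1 \<Rightarrow> 'h::comm_ring_1 \<Rightarrow> 'h) \<Rightarrow> ('h \<Rightarrow> nat list \<Rightarrow> 'h)
    \<Rightarrow> (('h \<times> 'h) \<Rightarrow>\<^sub>0 'k) \<Rightarrow> nat list \<Rightarrow> 'h" where
  "fsharp sc f t \<alpha> = (\<Sum>p\<in>Poly_Mapping.keys t. sc (Poly_Mapping.lookup t p) (fst p * f (snd p) \<alpha>))"

text \<open>Comultiplication id_H (x) Delta of the H-coalgebra H (x) H, landing in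
 (H (x) H) (x)_H (H (x) H) = H (x) H (x) H: a (x) h |-> sum a (x) h_(1) (x) h_(2).\<close>
definition HH_comul :: "('h \<Rightarrow> ('h \<times> 'h) \<Rightarrow>\<^sub>0 'k::comm_ring_1) \<Rightarrow> (('h \<times> 'h) \<Rightarrow>\<^sub>0 'k) \<Rightarrow> (('h \<times> 'h \<times> 'h) \<Rightarrow>\<^sub>0 'k)" where
  "HH_comul D t = comul_right D t"

definition HH_counit :: "('k::comm_ring_1 \<Rightarrow> 'h::comm_ring_1 \<Rightarrow> 'h) \<Rightarrow> ('h \<Rightarrow> 'k) \<Rightarrow> (('h \<times> 'h) \<Rightarrow>\<^sub>0 'k) \<Rightarrow> 'h" where
  "HH_counit sc e t = tlift2 sc (\<lambda>a b. sc (e b) a) t"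

definition fsharp2 :: "('k::comm_ring_1 \<Rightarrow> 'h::comm_ring_1 \<Rightarrow> 'h) \<Rightarrow> ('h \<Rightarrow> nat list \<Rightarrow> 'h)
    \<Rightarrow> (('h \<times> 'h \<times> 'h) \<Rightarrow>\<^sub>0 'k) \<Rightarrow> nat list \<times> nat list \<Rightarrow> 'h" where
  "fsharp2 sc f s p = (\<Sum>q\<in>Poly_Mapping.keys s. sc (Poly_Mapping.lookup s q)
       (fst q * f (fst (snd q)) (fst p) * f (snd (snd q)) (snd p)))"

definition kH_coalg_hom :: "('k::comm_ring_1 \<Rightarrow> 'h::comm_ring_1 \<Rightarrow> 'h) \<Rightarrow> ('h \<Rightarrow> ('h \<times> 'h) \<Rightarrow>\<^sub>0 'k)
    \<Rightarrow> ('h \<Rightarrow> 'k) \<Rightarrow> ('h \<Rightarrow> nat list \<Rightarrow> 'h) \<Rightarrow> bool" where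
  "kH_coalg_hom sc D e f \<longleftrightarrow>
     (\<forall>t. qcomul (fsharp sc f t) = fsharp2 sc f (HH_comul D t)) \<and>
     (\<forall>t. qcounit (fsharp sc f t) = HH_counit sc e t)"

end

theory Submission
  imports Defs
begin

definition LL :: "('k::comm_ring_1 \<Rightarrow> 'h::ab_group_add \<Rightarrow> 'h) \<Rightarrow> ('x \<Rightarrow> 'h) \<Rightarrow> ('x \<Rightarrow>\<^sub>0 'k) \<Rightarrow> 'h" where
  "LL sc b t = (\<Sum>p\<in>Poly_Mapping.keys t. sc (Poly_Mapping.lookup t p) (b p))"

definition bil :: "('k::comm_ring_1 \<Rightarrow> 'h::ab_group_add \<Rightarrow> 'h) \<Rightarrow> ('h \<Rightarrow> 'h \<Rightarrow> 'h) \<Rightarrow> bool" where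
  "bil sc b \<longleftrightarrow> (\<forall>x x' y. b (x + x') y = b x y + b x' y) \<and> (\<forall>x y y'. b x (y + y') = b x y + b x y')
     \<and> (\<forall>c x y. b (sc c x) y = sc c (b x y)) \<and> (\<forall>c x y. b x (sc c y) = sc c (b x y))"

definition tril :: "('k::comm_ring_1 \<Rightarrow> 'h::ab_group_add \<Rightarrow> 'h) \<Rightarrow> ('h \<Rightarrow> 'h \<Rightarrow> 'h \<Rightarrow> 'h) \<Rightarrow> bool" where
  "tril sc b \<longleftrightarrow> (\<forall>x x' y z. b (x + x') y z = b x y z + b x' y z) \<and> (\<forall>x y y' z. b x (y + y') z = b x y z + b x y' z)
     \<and> (\<forall>x y z z'. b x y (z + z') = b x y z + b x y z')
     \<and> (\<forall>c x y z. b (sc c x) y z = sc c (b x y z)) \<and> (\<forall>c x y z. b x (sc c y) z = sc c (b x y z))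
     \<and> (\<forall>c x y z. b x y (sc c z) = sc c (b x y z))"

lemma lookup_map_mult: "Poly_Mapping.lookup (Poly_Mapping.map ((*) (c::'k::comm_ring_1)) t) p = c * Poly_Mapping.lookup t p"
  by (simp add: Poly_Mapping.map.rep_eq when_def)

lemma keys_map_mult: "Poly_Mapping.keys (Poly_Mapping.map ((*) (c::'k::comm_ring_1)) t) \<subseteq> Poly_Mapping.keys t"
  by (auto simp: in_keys_iff lookup_map_mult)

context module
begin

lemma LL_superset:
  assumes "finite S" "Poly_Mapping.keys t \<subseteq> S"
  shows "LL scale b t = (\<Sum>p\<in>S. scale (Poly_Mapping.lookup t p) (b p))"
  unfolding LL_def by (rule sum.mono_neutral_left) (use assms in \<open>auto simp: in_keys_iff\<close>)

lemma LL_add: "LL scale b (s + t) = LL scale b s + LL scale b t"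
proof -
  let ?S = "Poly_Mapping.keys s \<union> Poly_Mapping.keys t"
  have f: "finite ?S" by simp
  have 1: "LL scale b (s + t) = (\<Sum>p\<in>?S. scale (Poly_Mapping.lookup (s + t) p) (b p))"
    by (rule LL_superset[OF f]) (rule keys_add)
  have 2: "LL scale b s = (\<Sum>p\<in>?S. scale (Poly_Mapping.lookup s p) (b p))"
    by (rule LL_superset[OF f]) (rule Un_upper1)
  have 3: "LL scale b t = (\<Sum>p\<in>?S. scale (Poly_Mapping.lookup t p) (b p))"
    by (rule LL_superset[OF f]) (rule Un_upper2)
  show ?thesis unfolding 1 2 3 lookup_add scale_left_distrib sum.distrib ..
qed

lemma LL_zero [simp]: "LL scale b 0 = 0"
  by (simp add: LL_def)

lemma LL_uminus: "LL scale b (- t) = - LL scale b t"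
proof -
  have "LL scale b t + LL scale b (- t) = 0" using LL_add[of b t "- t"] by simp
  then show ?thesis by (simp add: add_eq_0_iff)
qed

lemma LL_diff: "LL scale b (s - t) = LL scale b s - LL scale b t"
  using LL_add[of b s "- t"] by (simp add: LL_uminus)

lemma LL_single [simp]: "LL scale b (Poly_Mapping.single p c) = scale c (b p)"
  by (simp add: LL_def)

lemma LL_sum: "LL scale b (sum f A) = (\<Sum>i\<in>A. LL scale b (f i))"
  by (induct A rule: infinite_finite_induct) (auto simp: LL_add)

lemma LL_map: "LL scale b (Poly_Mapping.map ((*) c) t) = scale c (LL scale b t)"
proof -
  have "LL scale b (Poly_Mapping.map ((*) c) t) = (\<Sum>p\<in>Poly_Mapping.keys t. scale (Poly_Mapping.lookup (Poly_Mapping.map ((*) c) t) p) (b p))"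
    by (rule LL_superset) (auto simp: keys_map_mult)
  also have "\<dots> = scale c (LL scale b t)"
    by (simp add: LL_def lookup_map_mult scale_sum_right)
  finally show ?thesis .
qed

lemma LL_cong: "(\<And>p. p \<in> Poly_Mapping.keys t \<Longrightarrow> b p = b' p) \<Longrightarrow> LL scale b t = LL scale b' t"
  by (simp add: LL_def)

lemma LL_zero_fun: "(\<And>p. p \<in> Poly_Mapping.keys t \<Longrightarrow> b p = 0) \<Longrightarrow> LL scale b t = 0"
  by (simp add: LL_def)

lemma LL_add_fun: "LL scale (\<lambda>p. b p + b' p) t = LL scale b t + LL scale b' t"
  by (simp add: LL_def scale_right_distrib sum.distrib)

lemma LL_scale_fun: "LL scale (\<lambda>p. scale c (b p)) t = scale c (LL scale b t)"
  by (simp add: LL_def scale_sum_right mult.commute)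

lemma LL_sum_fun: "LL scale (\<lambda>p. \<Sum>i\<in>A. b i p) t = (\<Sum>i\<in>A. LL scale (b i) t)"
  unfolding LL_def scale_sum_right by (rule sum.swap)

lemma LL_lin:
  assumes "klinear scale g"
  shows "g (LL scale b t) = LL scale (\<lambda>p. g (b p)) t"
proof -
  have a: "g (x + y) = g x + g y" "g (scale c x) = scale c (g x)" for x y c
    using assms by (auto simp: klinear_def)
  interpret g: additive g by standard (rule a(1))
  show ?thesis by (simp add: LL_def g.sum a(2))
qed

lemma lin_sum: "klinear scale g \<Longrightarrow> g (sum f A) = (\<Sum>i\<in>A. g (f i))"
proof -
  assume "klinear scale g"
  then interpret g: additive g by unfold_locales (simp add: klinear_def)
  show ?thesis by (rule g.sum)
qed

lemma lin_zero: "klinear scale g \<Longrightarrow> g 0 = 0"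
  using lin_sum[of g _ "{}"] by simp

lemma lin_add: "klinear scale g \<Longrightarrow> g (x + y) = g x + g y"
  by (simp add: klinear_def)

lemma lin_sc: "klinear scale g \<Longrightarrow> g (scale c x) = scale c (g x)"
  by (simp add: klinear_def)

lemma lin_diff: "klinear scale g \<Longrightarrow> g (x - y) = g x - g y"
proof -
  assume "klinear scale g"
  then interpret g: additive g by unfold_locales (simp add: klinear_def)
  show ?thesis by (rule g.diff)
qed

lemma LL_tens2:
  assumes "bil scale b" "p \<in> tens2 scale"
  shows "LL scale (\<lambda>q. b (fst q) (snd q)) p = 0"
  using assms(2)
proof induct
  case (t2_smul p c)
  then show ?case by (simp add: LL_map)
next
  case (t2_addl x x' y) then show ?case using assms(1) unfolding bil_def by (simp only: LL_diff LL_single scale_one) simp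
next
  case (t2_addr x y y') then show ?case using assms(1) unfolding bil_def by (simp only: LL_diff LL_single scale_one) simp
next
  case (t2_scl c x y) then show ?case using assms(1) unfolding bil_def by (simp only: LL_diff LL_single scale_one) simp
next
  case (t2_scr x c y) then show ?case using assms(1) unfolding bil_def by (simp only: LL_diff LL_single scale_one) simp
qed (simp_all add: LL_add)

lemma LL_tens3:
  assumes "tril scale b" "p \<in> tens3 scale"
  shows "LL scale (\<lambda>q. b (fst q) (fst (snd q)) (snd (snd q))) p = 0"
  using assms(2)
proof induct
  case (t3_smul p c)
  then show ?case by (simp add: LL_map)
next
  case (t3_add1 x x' y z) then show ?case using assms(1) unfolding tril_def by (simp only: LL_diff LL_single scale_one) simp
next
  case (t3_add2 x y y' z) then show ?case using assms(1) unfolding tril_def by (simp only: LL_diff LL_single scale_one) simp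
next
  case (t3_add3 x y z z') then show ?case using assms(1) unfolding tril_def by (simp only: LL_diff LL_single scale_one) simp
next
  case (t3_sc1 c x y z) then show ?case using assms(1) unfolding tril_def by (simp only: LL_diff LL_single scale_one) simp
next
  case (t3_sc2 x c y z) then show ?case using assms(1) unfolding tril_def by (simp only: LL_diff LL_single scale_one) simp
next
  case (t3_sc3 x y c z) then show ?case using assms(1) unfolding tril_def by (simp only: LL_diff LL_single scale_one) simp
qed (simp_all add: LL_add)

lemma LL_teq2:
  assumes "bil scale b" "teq2 scale s t"
  shows "LL scale (\<lambda>q. b (fst q) (snd q)) s = LL scale (\<lambda>q. b (fst q) (snd q)) t"
  using LL_tens2[OF assms(1), of "s - t"] assms(2) by (simp add: teq2_def LL_diff)

lemma LL_teq3:
  assumes "tril scale b" "teq3 scale s t"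
  shows "LL scale (\<lambda>q. b (fst q) (fst (snd q)) (snd (snd q))) s = LL scale (\<lambda>q. b (fst q) (fst (snd q)) (snd (snd q))) t"
  using LL_tens3[OF assms(1), of "s - t"] assms(2) by (simp add: teq3_def LL_diff)

end

lemma tlift2_LL: "tlift2 sc b t = LL sc (\<lambda>q. b (fst q) (snd q)) t"
  by (simp add: tlift2_def LL_def)

locale hctx =
  fixes sc :: "'k::comm_ring_1 \<Rightarrow> 'h::comm_ring_1 \<Rightarrow> 'h" and Hn :: "nat \<Rightarrow> 'h set"
    and D :: "'h \<Rightarrow> ('h \<times> 'h) \<Rightarrow>\<^sub>0 'k" and e :: "'h \<Rightarrow> 'k"
  assumes H: "comm_conn_graded_hopf sc Hn D e"
begin

lemmas HH = H[unfolded comm_conn_graded_hopf_def]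

lemma modl: "module sc" using HH by simp

sublocale module sc by (rule modl)

lemma sc_mult: "sc c (x * y) = sc c x * y" using HH by simp
lemma sc_mult2: "sc c (x * y) = x * sc c y" using sc_mult[of c y x] by (simp add: mult.commute)
lemma gd: "graded_decomp sc Hn" using HH by simp
lemma one_H0: "1 \<in> Hn 0" using HH by simp
lemma mult_H: "x \<in> Hn i \<Longrightarrow> y \<in> Hn j \<Longrightarrow> x * y \<in> Hn (i + j)" using HH by simp
lemma D_add: "teq2 sc (D (x + y)) (D x + D y)" using HH by simp
lemma D_sc: "teq2 sc (D (sc c x)) (Poly_Mapping.map ((*) c) (D x))" using HH by simp
lemma e_add: "e (x + y) = e x + e y" using HH by simp
lemma e_sc: "e (sc c x) = c * e x" using HH by simp
lemma coassoc: "teq3 sc (comul_left D (D x)) (comul_right D (D x))" using HH by simp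
lemma counitL: "tlift2 sc (\<lambda>a b. sc (e a) b) (D x) = x" using HH by simp
lemma counitR: "tlift2 sc (\<lambda>a b. sc (e b) a) (D x) = x" using HH by simp
lemma D_mult: "teq2 sc (D (x * y)) (tmult2 (D x) (D y))" using HH by simp
lemma D_one: "teq2 sc (D 1) (Poly_Mapping.single (1, 1) 1)" using HH by simp
lemma e_mult: "e (x * y) = e x * e y" using HH by simp
lemma e_one: "e 1 = 1" using HH by simp
lemma D_grad: "x \<in> Hn n \<Longrightarrow> \<exists>t. teq2 sc (D x) t \<and>
         (\<forall>p\<in>Poly_Mapping.keys t. \<exists>i j. i + j = n \<and> fst p \<in> Hn i \<and> snd p \<in> Hn j)"
  using HH by simp
lemma e_pos: "n > 0 \<Longrightarrow> x \<in> Hn n \<Longrightarrow> e x = 0" using HH by simp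
lemma e_bij: "bij_betw e (Hn 0) UNIV" using HH by simp

lemma sub: "ksubmodule sc (Hn n)" using gd by (simp add: graded_decomp_def)
lemma H_zero: "0 \<in> Hn n" using sub[of n] by (simp add: ksubmodule_def)
lemma H_add: "x \<in> Hn n \<Longrightarrow> y \<in> Hn n \<Longrightarrow> x + y \<in> Hn n" using sub[of n] by (simp add: ksubmodule_def)
lemma H_sc: "x \<in> Hn n \<Longrightarrow> sc c x \<in> Hn n" using sub[of n] by (simp add: ksubmodule_def)
lemma H_sum: "(\<And>i. i \<in> A \<Longrightarrow> f i \<in> Hn n) \<Longrightarrow> sum f A \<in> Hn n"
  by (induct A rule: infinite_finite_induct) (auto simp: H_zero H_add)

lemma e_lin: "e (sum f A) = (\<Sum>i\<in>A. e (f i))"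
proof -
  interpret ee: additive e by standard (rule e_add)
  show ?thesis by (rule ee.sum)
qed

lemma e_zero: "e 0 = 0" using e_lin[of _ "{}"] by simp

definition PP :: "'h \<Rightarrow> (nat \<Rightarrow> 'h) \<Rightarrow> bool" where
  "PP x f \<longleftrightarrow> (\<forall>n. f n \<in> Hn n) \<and> finite {n. f n \<noteq> 0} \<and> x = (\<Sum>n\<in>{n. f n \<noteq> 0}. f n)"

lemma ex1P: "\<exists>!f. PP x f" using gd unfolding graded_decomp_def PP_def by blast

lemma proj_eq: "proj Hn n x = (THE f. PP x f) n"
  by (simp add: proj_def PP_def)

lemma proj_unique: "PP x f \<Longrightarrow> proj Hn n x = f n"
  unfolding proj_eq using the1_equality[OF ex1P] by metis

lemma proj_P: "PP x (\<lambda>n. proj Hn n x)"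
proof -
  have "PP x (THE f. PP x f)" by (rule theI'[OF ex1P])
  then show ?thesis unfolding proj_eq by (simp add: eta_contract_eq)
qed

lemma proj_in: "proj Hn n x \<in> Hn n" using proj_P[of x] by (simp add: PP_def)
lemma proj_fin: "finite {n. proj Hn n x \<noteq> 0}" using proj_P[of x] by (simp add: PP_def)

lemma sum_supp: "finite S \<Longrightarrow> {n. f n \<noteq> 0} \<subseteq> S \<Longrightarrow> sum f S = sum f {n. f n \<noteq> (0::'a::comm_monoid_add)}"
  by (rule sum.mono_neutral_right) auto

lemma proj_sum: "finite S \<Longrightarrow> {n. proj Hn n x \<noteq> 0} \<subseteq> S \<Longrightarrow> x = (\<Sum>n\<in>S. proj Hn n x)"
  using proj_P[of x] sum_supp[of S "\<lambda>n. proj Hn n x"] by (simp add: PP_def)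

lemma PP_intro:
  assumes "\<And>n. f n \<in> Hn n" "finite S" "{n. f n \<noteq> 0} \<subseteq> S" "x = sum f S"
  shows "PP x f"
  unfolding PP_def using assms sum_supp[of S f] finite_subset[OF assms(3,2)] by auto

lemma proj_add: "proj Hn n (x + y) = proj Hn n x + proj Hn n y"
proof -
  let ?S = "{n. proj Hn n x \<noteq> 0} \<union> {n. proj Hn n y \<noteq> 0}"
  have "PP (x + y) (\<lambda>n. proj Hn n x + proj Hn n y)"
  proof (rule PP_intro[where S = ?S])
    show "x + y = (\<Sum>n\<in>?S. proj Hn n x + proj Hn n y)"
      using proj_sum[of ?S x] proj_sum[of ?S y] proj_fin[of x] proj_fin[of y]
      by (simp add: sum.distrib)
  qed (auto simp: proj_in H_add proj_fin)
  then show ?thesis by (rule proj_unique)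
qed

lemma proj_sc: "proj Hn n (sc c x) = sc c (proj Hn n x)"
proof -
  let ?S = "{n. proj Hn n x \<noteq> 0}"
  have "PP (sc c x) (\<lambda>n. sc c (proj Hn n x))"
  proof (rule PP_intro[where S = ?S])
    show "sc c x = (\<Sum>n\<in>?S. sc c (proj Hn n x))"
      using proj_sum[of ?S x] proj_fin[of x] by (simp add: scale_sum_right[symmetric])
  qed (auto simp: proj_in H_sc proj_fin)
  then show ?thesis by (rule proj_unique)
qed

lemma proj_lin: "klinear sc (proj Hn n)"
  by (simp add: klinear_def proj_add proj_sc)

lemma proj_hom: "x \<in> Hn m \<Longrightarrow> proj Hn n x = (if n = m then x else 0)"
proof -
  assume x: "x \<in> Hn m"
  have "PP x (\<lambda>n. if n = m then x else 0)"
    by (rule PP_intro[where S = "{m}"]) (auto simp: x H_zero)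
  then show ?thesis by (rule proj_unique)
qed

lemma proj_bound: "\<exists>N. \<forall>n>N. proj Hn n x = 0"
proof -
  obtain N where "\<forall>n\<in>{n. proj Hn n x \<noteq> 0}. n \<le> N"
    using proj_fin[of x] finite_nat_set_iff_bounded_le by blast
  then show ?thesis by (metis (mono_tags) mem_Collect_eq not_le)
qed

lemma proj_sum_atMost: "\<forall>n>N. proj Hn n x = 0 \<Longrightarrow> x = (\<Sum>n\<le>N. proj Hn n x)"
  by (rule proj_sum) (auto simp: not_le[symmetric])

lemma e_proj0: "e x = e (proj Hn 0 x)"
proof -
  obtain N where N: "\<forall>n>N. proj Hn n x = 0" using proj_bound by blast
  have "e x = (\<Sum>n\<le>N. e (proj Hn n x))"
    using proj_sum_atMost[OF N] e_lin by metis
  also have "\<dots> = (\<Sum>n\<le>N. if n = 0 then e (proj Hn 0 x) else 0)"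
    by (rule sum.cong) (auto simp: e_pos proj_in)
  also have "\<dots> = e (proj Hn 0 x)" by simp
  finally show ?thesis .
qed

lemma proj0: "proj Hn 0 x = sc (e x) 1"
proof -
  have inj: "inj_on e (Hn 0)" using e_bij by (simp add: bij_betw_def)
  have "e (sc (e x) 1) = e (proj Hn 0 x)" by (simp add: e_sc e_one e_proj0[symmetric])
  then show ?thesis using inj_onD[OF inj] proj_in H_sc one_H0 by metis
qed

end

context hctx
begin

abbreviation u :: "'h \<Rightarrow> 'h" where "u x \<equiv> sc (e x) 1"

lemma tl_teq: "bil sc b \<Longrightarrow> teq2 sc s t \<Longrightarrow> tlift2 sc b s = tlift2 sc b t"
  unfolding tlift2_LL by (rule LL_teq2)

lemma sc_mult_r: "x * sc c y = sc c x * y" by (metis sc_mult sc_mult2)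

lemma bil_prod: "klinear sc f \<Longrightarrow> klinear sc g \<Longrightarrow> bil sc (\<lambda>a b. f a * g b)"
  by (simp add: bil_def klinear_def distrib_left distrib_right sc_mult sc_mult_r)

lemma tril_prod: "klinear sc f \<Longrightarrow> klinear sc g \<Longrightarrow> klinear sc h \<Longrightarrow> tril sc (\<lambda>a b c. f a * g b * h c)"
  by (simp add: tril_def klinear_def distrib_left distrib_right sc_mult sc_mult_r)

lemma u_lin: "klinear sc u"
  by (simp add: klinear_def e_add e_sc scale_left_distrib)

lemma conv_add: "klinear sc f \<Longrightarrow> klinear sc g \<Longrightarrow> conv sc D f g (x + y) = conv sc D f g x + conv sc D f g y"
  unfolding conv_def
  by (subst tl_teq[OF bil_prod D_add], assumption+) (simp add: tlift2_LL LL_add)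

lemma conv_sc: "klinear sc f \<Longrightarrow> klinear sc g \<Longrightarrow> conv sc D f g (sc c x) = sc c (conv sc D f g x)"
  unfolding conv_def
  by (subst tl_teq[OF bil_prod D_sc], assumption+) (simp add: tlift2_LL LL_map)

lemma conv_lin: "klinear sc f \<Longrightarrow> klinear sc g \<Longrightarrow> klinear sc (conv sc D f g)"
  by (simp add: klinear_def conv_add conv_sc)

lemma conv_unitL: "klinear sc g \<Longrightarrow> conv sc D u g x = g x"
proof -
  assume g: "klinear sc g"
  have "conv sc D u g x = LL sc (\<lambda>q. g (sc (e (fst q)) (snd q))) (D x)"
    unfolding conv_def tlift2_LL
    by (rule LL_cong) (simp add: lin_sc[OF g] sc_mult[symmetric])
  also have "\<dots> = g (LL sc (\<lambda>q. sc (e (fst q)) (snd q)) (D x))"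
    by (rule LL_lin[OF g, symmetric])
  also have "\<dots> = g x" using counitL[of x] by (simp add: tlift2_LL)
  finally show ?thesis .
qed

lemma conv_unitR: "klinear sc f \<Longrightarrow> conv sc D f u x = f x"
proof -
  assume g: "klinear sc f"
  have "conv sc D f u x = LL sc (\<lambda>q. f (sc (e (snd q)) (fst q))) (D x)"
    unfolding conv_def tlift2_LL
    by (rule LL_cong) (simp add: lin_sc[OF g] sc_mult2[symmetric])
  also have "\<dots> = f (LL sc (\<lambda>q. sc (e (snd q)) (fst q)) (D x))"
    by (rule LL_lin[OF g, symmetric])
  also have "\<dots> = f x" using counitR[of x] by (simp add: tlift2_LL)
  finally show ?thesis .
qed

lemma LL_mult_right: "LL sc b t * y = LL sc (\<lambda>p. b p * y) t"
  by (simp add: LL_def sum_distrib_right sc_mult)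

lemma LL_mult_left: "y * LL sc b t = LL sc (\<lambda>p. y * b p) t"
  by (simp add: LL_def sum_distrib_left sc_mult2)

lemma LL_comul_left:
  "LL sc b (comul_left D t) = LL sc (\<lambda>p. LL sc (\<lambda>q. b (fst q, snd q, snd p)) (D (fst p))) t"
  unfolding comul_left_def LL_sum LL_single by (simp add: LL_def scale_sum_right)

lemma LL_comul_right:
  "LL sc b (comul_right D t) = LL sc (\<lambda>p. LL sc (\<lambda>q. b (fst p, fst q, snd q)) (D (snd p))) t"
  unfolding comul_right_def LL_sum LL_single by (simp add: LL_def scale_sum_right)

lemma conv_assoc:
  assumes f: "klinear sc f" and g: "klinear sc g" and h: "klinear sc h"
  shows "conv sc D (conv sc D f g) h x = conv sc D f (conv sc D g h) x"
proof -
  let ?b = "\<lambda>a b c. f a * g b * h c"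
  have "conv sc D (conv sc D f g) h x = LL sc (\<lambda>q. ?b (fst q) (fst (snd q)) (snd (snd q))) (comul_left D (D x))"
    unfolding LL_comul_left conv_def tlift2_LL LL_mult_right by simp
  also have "\<dots> = LL sc (\<lambda>q. ?b (fst q) (fst (snd q)) (snd (snd q))) (comul_right D (D x))"
    by (rule LL_teq3[OF tril_prod[OF f g h] coassoc])
  also have "\<dots> = conv sc D f (conv sc D g h) x"
    unfolding LL_comul_right conv_def tlift2_LL LL_mult_left by (simp add: mult.assoc)
  finally show ?thesis .
qed

abbreviation X :: "nat list \<Rightarrow> 'h \<Rightarrow> 'h" where "X w \<equiv> xi sc Hn D e w"

lemma X_Nil: "X [] = u" by simp

lemma X_Cons: "X (a # w) = conv sc D (proj Hn a) (X w)"
proof (cases w)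
  case Nil
  then show ?thesis by (simp add: fun_eq_iff conv_unitR proj_lin)
qed simp

lemma X_lin: "klinear sc (X w)"
  by (induct w) (simp_all only: X_Nil X_Cons u_lin conv_lin proj_lin)

lemma X_append: "X (v @ w) x = conv sc D (X v) (X w) x"
proof (induct v arbitrary: x)
  case Nil
  then show ?case by (simp add: conv_unitL X_lin)
next
  case (Cons a v)
  have fe: "X (v @ w) = conv sc D (X v) (X w)" using Cons by (simp add: fun_eq_iff)
  have "X ((a # v) @ w) = conv sc D (proj Hn a) (conv sc D (X v) (X w))"
    by (simp only: append_Cons X_Cons fe)
  also have "\<dots> = conv sc D (conv sc D (proj Hn a) (X v)) (X w)"
    by (simp add: fun_eq_iff conv_assoc proj_lin X_lin)
  finally show ?case by (simp add: X_Cons)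
qed

lemma proj0_fun: "proj Hn 0 = u" by (simp add: fun_eq_iff proj0)

lemma X_zero: "X (0 # w) = X w"
  by (simp add: X_Cons proj0_fun fun_eq_iff conv_unitL X_lin)

lemma X_filter: "X (filter (\<lambda>x. x \<noteq> 0) w) = X w"
proof (induct w)
  case (Cons a w)
  show ?case
  proof (cases "a = 0")
    case True
    then show ?thesis using Cons by (simp add: X_zero)
  next
    case False
    then have "filter (\<lambda>x. x \<noteq> 0) (a # w) = a # filter (\<lambda>x. x \<noteq> 0) w" by simp
    then show ?thesis by (simp only: X_Cons Cons)
  qed
qed simp

lemma X_graded: "x \<in> Hn n \<Longrightarrow> sum_list w \<noteq> n \<Longrightarrow> X w x = 0"
proof (induct w arbitrary: n x)
  case Nil
  then show ?case by (simp add: e_pos)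
next
  case (Cons a w)
  obtain t where t: "teq2 sc (D x) t" and tk: "\<forall>p\<in>Poly_Mapping.keys t. \<exists>i j. i + j = n \<and> fst p \<in> Hn i \<and> snd p \<in> Hn j"
    using D_grad[OF Cons(2)] by blast
  have "X (a # w) x = tlift2 sc (\<lambda>a' b'. proj Hn a a' * X w b') t"
    unfolding X_Cons conv_def by (rule tl_teq[OF bil_prod[OF proj_lin X_lin] t])
  also have "\<dots> = 0"
    unfolding tlift2_LL
  proof (rule LL_zero_fun)
    fix p assume "p \<in> Poly_Mapping.keys t"
    then obtain i j where ij: "i + j = n" "fst p \<in> Hn i" "snd p \<in> Hn j" using tk by blast
    show "proj Hn a (fst p) * X w (snd p) = 0"
    proof (cases "a = i")
      case True
      then have "sum_list w \<noteq> j" using Cons(3) ij(1) by auto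
      then show ?thesis using Cons(1)[OF ij(3)] by simp
    next
      case False
      then show ?thesis by (simp add: proj_hom[OF ij(2)])
    qed
  qed
  finally show ?case .
qed

lemma X_proj: "X w (proj Hn c y) = (if sum_list w = c then X w y else 0)"
proof (cases "sum_list w = c")
  case True
  obtain N0 where N0: "\<forall>n>N0. proj Hn n y = 0" using proj_bound by blast
  let ?N = "max N0 c"
  have N: "\<forall>n>?N. proj Hn n y = 0" using N0 by simp
  have "X w y = (\<Sum>n\<le>?N. X w (proj Hn n y))"
    using proj_sum_atMost[OF N] lin_sum[OF X_lin] by metis
  also have "\<dots> = (\<Sum>n\<le>?N. if n = c then X w (proj Hn c y) else 0)"
    by (rule sum.cong) (auto simp: X_graded[OF proj_in] True)
  also have "\<dots> = X w (proj Hn c y)" by simp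
  finally show ?thesis using True by simp
next
  case False
  then show ?thesis by (simp add: X_graded[OF proj_in])
qed

end

fun splits :: "nat list \<Rightarrow> nat list set" where
  "splits [] = {[]}"
| "splits (a # w) = (\<lambda>(i, v). i # v) ` ({..a} \<times> splits w)"

lemma finite_splits [simp]: "finite (splits w)"
  by (induct w) auto

lemma inj_cons_pair: "inj_on (\<lambda>(i::nat, v). i # v) A"
  by (auto simp: inj_on_def)

abbreviation ldiff :: "nat list \<Rightarrow> nat list \<Rightarrow> nat list" where
  "ldiff a b \<equiv> map2 (-) a b"

context hctx
begin

lemma proj_mult: "proj Hn c (x * y) = (\<Sum>i\<le>c. proj Hn i x * proj Hn (c - i) y)"
proof -
  obtain N1 where N1: "\<forall>n>N1. proj Hn n x = 0" using proj_bound by blast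
  obtain N2 where N2: "\<forall>n>N2. proj Hn n y = 0" using proj_bound by blast
  define N where "N = max c (max N1 N2)"
  have x: "x = (\<Sum>i\<le>N. proj Hn i x)" by (rule proj_sum_atMost) (use N1 N_def in auto)
  have y: "y = (\<Sum>j\<le>N. proj Hn j y)" by (rule proj_sum_atMost) (use N2 N_def in auto)
  have "proj Hn c (x * y) = proj Hn c (\<Sum>i\<le>N. \<Sum>j\<le>N. proj Hn i x * proj Hn j y)"
    by (subst x, subst y) (simp add: sum_product)
  also have "\<dots> = (\<Sum>i\<le>N. \<Sum>j\<le>N. proj Hn c (proj Hn i x * proj Hn j y))"
    by (simp add: lin_sum[OF proj_lin])
  also have "\<dots> = (\<Sum>i\<le>N. \<Sum>j\<le>N. if j = c - i then (if i \<le> c then proj Hn i x * proj Hn j y else 0) else 0)"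
    by (intro sum.cong refl) (auto simp: proj_hom[OF mult_H[OF proj_in proj_in]])
  also have "\<dots> = (\<Sum>i\<le>N. if i \<le> c then proj Hn i x * proj Hn (c - i) y else 0)"
    by (intro sum.cong refl) (auto simp: N_def)
  also have "\<dots> = (\<Sum>i\<in>{i\<in>{..N}. i \<le> c}. proj Hn i x * proj Hn (c - i) y)"
    by (rule sum.inter_filter[symmetric]) simp
  also have "{i\<in>{..N}. i \<le> c} = {..c}" by (auto simp: N_def)
  finally show ?thesis .
qed

lemma LL_tmult2:
  "LL sc b (tmult2 s t) = LL sc (\<lambda>p. LL sc (\<lambda>q. b (fst p * fst q, snd p * snd q)) t) s"
  unfolding tmult2_def LL_sum LL_single by (simp add: LL_def scale_sum_right)

lemma conv_mult: "klinear sc f \<Longrightarrow> klinear sc g \<Longrightarrow>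
  conv sc D f g (x * y) = LL sc (\<lambda>p. LL sc (\<lambda>q. f (fst p * fst q) * g (snd p * snd q)) (D y)) (D x)"
  unfolding conv_def
  by (subst tl_teq[OF bil_prod D_mult], assumption+) (simp add: tlift2_LL LL_tmult2)

lemma LL_prod2: "LL sc (\<lambda>p. LL sc (\<lambda>q. A p * B q) t) s = LL sc A s * LL sc B t"
proof -
  have "LL sc A s * LL sc B t = LL sc (\<lambda>p. A p * LL sc B t) s" by (rule LL_mult_right)
  also have "\<dots> = LL sc (\<lambda>p. LL sc (\<lambda>q. A p * B q) t) s" by (simp only: LL_mult_left)
  finally show ?thesis by simp
qed

lemma X_mult: "X \<alpha> (x * y) = (\<Sum>\<beta>\<in>splits \<alpha>. X \<beta> x * X (ldiff \<alpha> \<beta>) y)"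
proof (induct \<alpha> arbitrary: x y)
  case Nil
  have "sc (e x * e y) 1 = sc (e x) 1 * sc (e y) 1"
    by (metis mult_1 sc_mult scale_scale)
  then show ?case by (simp add: e_mult)
next
  case (Cons a \<alpha>)
  let ?S = "splits \<alpha>"
  have pw: "proj Hn a (p1 * q1) * X \<alpha> (p2 * q2) =
     (\<Sum>i\<le>a. \<Sum>\<beta>\<in>?S. (proj Hn i p1 * X \<beta> p2) * (proj Hn (a - i) q1 * X (ldiff \<alpha> \<beta>) q2))" for p1 q1 p2 q2
    unfolding proj_mult Cons sum_product by (intro sum.cong refl) (simp add: mult_ac)
  have "X (a # \<alpha>) (x * y) = LL sc (\<lambda>p. LL sc (\<lambda>q. proj Hn a (fst p * fst q) * X \<alpha> (snd p * snd q)) (D y)) (D x)"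
    unfolding X_Cons by (rule conv_mult[OF proj_lin X_lin])
  also have "\<dots> = (\<Sum>i\<le>a. \<Sum>\<beta>\<in>?S. LL sc (\<lambda>p. LL sc (\<lambda>q. (proj Hn i (fst p) * X \<beta> (snd p)) * (proj Hn (a - i) (fst q) * X (ldiff \<alpha> \<beta>) (snd q))) (D y)) (D x))"
    unfolding pw LL_sum_fun ..
  also have "\<dots> = (\<Sum>i\<le>a. \<Sum>\<beta>\<in>?S. X (i # \<beta>) x * X ((a - i) # ldiff \<alpha> \<beta>) y)"
    unfolding LL_prod2 X_Cons conv_def tlift2_LL ..
  also have "\<dots> = (\<Sum>(i, \<beta>)\<in>{..a} \<times> ?S. X (i # \<beta>) x * X ((a - i) # ldiff \<alpha> \<beta>) y)"
    by (simp add: sum.cartesian_product)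
  also have "\<dots> = (\<Sum>\<beta>\<in>splits (a # \<alpha>). X \<beta> x * X (ldiff (a # \<alpha>) \<beta>) y)"
  proof -
    have "(\<Sum>\<beta>\<in>splits (a # \<alpha>). X \<beta> x * X (ldiff (a # \<alpha>) \<beta>) y)
       = (\<Sum>p\<in>{..a} \<times> ?S. (\<lambda>\<beta>. X \<beta> x * X (ldiff (a # \<alpha>) \<beta>) y) ((\<lambda>(i, v). i # v) p))"
      unfolding splits.simps sum.reindex[OF inj_cons_pair] comp_def ..
    then show ?thesis by (simp add: case_prod_beta')
  qed
  finally show ?case .
qed

end

fun mats :: "nat list \<Rightarrow> nat list \<Rightarrow> nat list list set" where
  "mats \<alpha> [] = (if (\<forall>x\<in>set \<alpha>. x = 0) then {[]} else {})"
| "mats \<alpha> (c # \<gamma>) = (\<lambda>(\<beta>, A). \<beta> # A) ` (SIGMA \<beta>:{\<beta>\<in>splits \<alpha>. sum_list \<beta> = c}. mats (ldiff \<alpha> \<beta>) \<gamma>)"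

lemma finite_mats [simp]: "finite (mats \<alpha> \<gamma>)"
proof (induct \<gamma> arbitrary: \<alpha>)
  case (Cons c \<gamma>)
  show ?case unfolding mats.simps by (intro finite_imageI finite_SigmaI) (simp_all add: Cons)
qed simp

lemma inj_cons_pair2: "inj_on (\<lambda>(b::nat list, A). b # A) S"
  by (auto simp: inj_on_def)

context hctx
begin

lemma X_all0: "\<forall>x\<in>set \<alpha>. x = 0 \<Longrightarrow> X \<alpha> = X []"
proof -
  assume a: "\<forall>x\<in>set \<alpha>. x = 0"
  have "filter (\<lambda>x. x \<noteq> 0) \<alpha> = []" using a by (simp add: filter_empty_conv)
  then show ?thesis using X_filter[of \<alpha>] by simp
qed

lemma X_one: "X \<alpha> 1 = (if (\<forall>x\<in>set \<alpha>. x = 0) then 1 else 0)"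
proof (cases "\<forall>x\<in>set \<alpha>. x = 0")
  case True
  then show ?thesis by (simp add: X_all0 e_one)
next
  case False
  then have "sum_list \<alpha> \<noteq> 0" by (simp add: sum_list_eq_0_iff)
  then show ?thesis using False X_graded[OF one_H0] by simp
qed

lemma X_X: "X \<alpha> (X \<gamma> h) = (\<Sum>A\<in>mats \<alpha> \<gamma>. X (concat A) h)"
proof (induct \<gamma> arbitrary: \<alpha> h)
  case Nil
  have "X \<alpha> (sc (e h) 1) = sc (e h) (X \<alpha> 1)" by (rule lin_sc[OF X_lin])
  then show ?case by (cases "\<forall>x\<in>set \<alpha>. x = 0") (auto simp: X_one)
next
  case (Cons c \<gamma>)
  let ?Sc = "{\<beta>\<in>splits \<alpha>. sum_list \<beta> = c}"
  have pw: "X \<alpha> (proj Hn c p1 * X \<gamma> p2) = (\<Sum>\<beta>\<in>?Sc. \<Sum>A\<in>mats (ldiff \<alpha> \<beta>) \<gamma>. X \<beta> p1 * X (concat A) p2)" for p1 p2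
  proof -
    have "X \<alpha> (proj Hn c p1 * X \<gamma> p2) = (\<Sum>\<beta>\<in>splits \<alpha>. if sum_list \<beta> = c then (\<Sum>A\<in>mats (ldiff \<alpha> \<beta>) \<gamma>. X \<beta> p1 * X (concat A) p2) else 0)"
      unfolding X_mult X_proj Cons by (intro sum.cong refl) (simp add: sum_distrib_left)
    also have "\<dots> = (\<Sum>\<beta>\<in>?Sc. \<Sum>A\<in>mats (ldiff \<alpha> \<beta>) \<gamma>. X \<beta> p1 * X (concat A) p2)"
      by (rule sum.inter_filter[symmetric]) simp
    finally show ?thesis .
  qed
  have "X \<alpha> (X (c # \<gamma>) h) = LL sc (\<lambda>p. X \<alpha> (proj Hn c (fst p) * X \<gamma> (snd p))) (D h)"
    unfolding X_Cons conv_def tlift2_LL by (rule LL_lin[OF X_lin])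
  also have "\<dots> = (\<Sum>\<beta>\<in>?Sc. \<Sum>A\<in>mats (ldiff \<alpha> \<beta>) \<gamma>. LL sc (\<lambda>p. X \<beta> (fst p) * X (concat A) (snd p)) (D h))"
    unfolding pw LL_sum_fun ..
  also have "\<dots> = (\<Sum>\<beta>\<in>?Sc. \<Sum>A\<in>mats (ldiff \<alpha> \<beta>) \<gamma>. X (concat (\<beta> # A)) h)"
    by (simp add: X_append conv_def tlift2_LL)
  also have "\<dots> = (\<Sum>(\<beta>, A)\<in>(SIGMA \<beta>:?Sc. mats (ldiff \<alpha> \<beta>) \<gamma>). X (concat (\<beta> # A)) h)"
    by (rule sum.Sigma) auto
  also have "\<dots> = (\<Sum>A\<in>mats \<alpha> (c # \<gamma>). X (concat A) h)"
    unfolding mats.simps sum.reindex[OF inj_cons_pair2] comp_def by (simp add: case_prod_beta')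
  finally show ?case .
qed

end

definition ci :: "nat \<Rightarrow> nat list \<Rightarrow> nat list" where
  "ci i l = (if i = 0 then l else i # l)"

definition gi :: "nat \<Rightarrow> nat \<Rightarrow> nat list \<times> nat list \<Rightarrow> nat list \<times> nat list" where
  "gi c i p = (ci i (fst p), ci (c - i) (snd p))"

fun GG :: "nat list \<Rightarrow> (nat list \<times> nat list) multiset" where
  "GG [] = {#([], [])#}"
| "GG (c # \<gamma>) = (\<Sum>i\<in>{..c}. image_mset (gi c i) (GG \<gamma>))"

lemma image_mset_sum: "image_mset f (sum M A) = (\<Sum>i\<in>A. image_mset f (M i))"
  by (induct A rule: infinite_finite_induct) auto

lemma sum_mset_sum: "sum_mset (sum M A) = (\<Sum>i\<in>A. sum_mset (M i))"
  by (induct A rule: infinite_finite_induct) auto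

lemma filter_cons_ci: "filter (\<lambda>x. x \<noteq> 0) (i # v) = ci i (filter (\<lambda>x. x \<noteq> 0) v)"
  by (simp add: ci_def)

lemma GG_sum:
  "(\<Sum>\<beta>\<in>splits \<gamma>. F (filter (\<lambda>x. x \<noteq> 0) \<beta>, filter (\<lambda>x. x \<noteq> 0) (ldiff \<gamma> \<beta>))) = sum_mset (image_mset F (GG \<gamma>))"
proof (induct \<gamma> arbitrary: F)
  case Nil
  then show ?case by simp
next
  case (Cons c \<gamma>)
  let ?fz = "filter (\<lambda>x::nat. x \<noteq> 0)"
  have "(\<Sum>\<beta>\<in>splits (c # \<gamma>). F (?fz \<beta>, ?fz (ldiff (c # \<gamma>) \<beta>)))
      = (\<Sum>p\<in>{..c} \<times> splits \<gamma>. (\<lambda>\<beta>. F (?fz \<beta>, ?fz (ldiff (c # \<gamma>) \<beta>))) ((\<lambda>(i, v). i # v) p))"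
    unfolding splits.simps sum.reindex[OF inj_cons_pair] comp_def ..
  also have "\<dots> = (\<Sum>(i, v)\<in>{..c} \<times> splits \<gamma>. (\<lambda>p. F (gi c i p)) (?fz v, ?fz (ldiff \<gamma> v)))"
    by (intro sum.cong refl) (clarsimp simp: gi_def ci_def)
  also have "\<dots> = (\<Sum>i\<in>{..c}. \<Sum>v\<in>splits \<gamma>. (\<lambda>p. F (gi c i p)) (?fz v, ?fz (ldiff \<gamma> v)))"
    by (rule sum.cartesian_product[symmetric])
  also have "\<dots> = (\<Sum>i\<in>{..c}. sum_mset (image_mset (\<lambda>p. F (gi c i p)) (GG \<gamma>)))"
    by (intro sum.cong refl) (rule Cons)
  also have "\<dots> = sum_mset (image_mset F (GG (c # \<gamma>)))"
    by (simp add: image_mset_sum sum_mset_sum image_mset.compositionality comp_def)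
  finally show ?case .
qed

lemma count_image_cons: "count (image_mset ((#) x) M) (y # ys) = (if x = y then count M ys else 0)"
proof (induct M)
  case (add z M) then show ?case by auto
qed simp

lemma count_image_cons_Nil: "count (image_mset ((#) x) M) [] = 0"
  by (auto simp add: count_eq_zero_iff)

lemma in_mset_sum: "finite A \<Longrightarrow> x \<in># sum M A \<longleftrightarrow> (\<exists>i\<in>A. x \<in># M i)"
  by (induct A rule: finite_induct) auto

lemma count_image_inj: "inj f \<Longrightarrow> count (image_mset f M) (f x) = count M x"
proof (induct M)
  case (add z M) then show ?case by (auto dest: injD)
qed simp

lemma count_image_notin: "y \<notin> range f \<Longrightarrow> count (image_mset f M) y = 0"
  by (auto simp: count_eq_zero_iff)

lemma is_comp_Cons [simp]: "is_comp (x # xs) \<longleftrightarrow> 0 < x \<and> is_comp xs"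
  by (simp add: is_comp_def)

lemma is_comp_Nil [simp]: "is_comp []"
  by (simp add: is_comp_def)

lemma GG_comp: "p \<in># GG \<gamma> \<Longrightarrow> is_comp (fst p) \<and> is_comp (snd p) \<and> sum_list (fst p) + sum_list (snd p) = sum_list \<gamma>"
proof (induct \<gamma> arbitrary: p)
  case (Cons c \<gamma>)
  then obtain i q where i: "i \<le> c" and q: "q \<in># GG \<gamma>" and p: "p = gi c i q"
    by (auto simp: in_mset_sum)  
  show ?case using Cons(1)[OF q] i by (auto simp: p gi_def ci_def)
qed simp

lemma count_GG_gi:
  fixes c :: nat assumes c: "0 < c" and ic: "i \<le> c"
  shows "count (image_mset (gi c i) M) (a, b) =
    (if i = 0 then (if b \<noteq> [] \<and> hd b = c then count M (a, tl b) else 0)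
     else if i = c then (if a \<noteq> [] \<and> hd a = c then count M (tl a, b) else 0)
     else (if a \<noteq> [] \<and> b \<noteq> [] \<and> hd a = i \<and> hd b = c - i then count M (tl a, tl b) else 0))"
proof -
  have inj: "inj (\<lambda>p::nat list \<times> nat list. (ci i (fst p), ci (c - i) (snd p)))"
    by (rule injI) (auto simp: ci_def split: if_splits simp: prod_eq_iff)
  have g: "gi c i = (\<lambda>p. (ci i (fst p), ci (c - i) (snd p)))" by (simp add: gi_def fun_eq_iff)
  show ?thesis
  proof (cases "(a, b) \<in> range (gi c i)")
    case True
    then obtain p where p: "(a, b) = gi c i p" by blast
    have "count (image_mset (gi c i) M) (a, b) = count M p"
      unfolding p g by (rule count_image_inj[OF inj])
    then show ?thesis using p c ic by (auto simp: gi_def ci_def)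
  next
    case False
    then have "count (image_mset (gi c i) M) (a, b) = 0" by (rule count_image_notin)
    moreover have "\<not> (i = 0 \<and> b \<noteq> [] \<and> hd b = c)"
    proof
      assume h: "i = 0 \<and> b \<noteq> [] \<and> hd b = c"
      then have "(a, b) = gi c i (a, tl b)" using c by (cases a; cases b) (auto simp: gi_def ci_def)
      then show False using False by auto
    qed
    moreover have "\<not> (i = c \<and> a \<noteq> [] \<and> hd a = c)"
    proof
      assume h: "i = c \<and> a \<noteq> [] \<and> hd a = c"
      then have "(a, b) = gi c i (tl a, b)" using c by (cases a; cases b) (auto simp: gi_def ci_def)
      then show False using False by auto
    qed
    moreover have "\<not> (i \<noteq> 0 \<and> i \<noteq> c \<and> a \<noteq> [] \<and> b \<noteq> [] \<and> hd a = i \<and> hd b = c - i)"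
    proof
      assume h: "i \<noteq> 0 \<and> i \<noteq> c \<and> a \<noteq> [] \<and> b \<noteq> [] \<and> hd a = i \<and> hd b = c - i"
      then have "(a, b) = gi c i (tl a, tl b)" using c ic by (cases a; cases b) (auto simp: gi_def ci_def)
      then show False using False by auto
    qed
    ultimately show ?thesis by auto
  qed
qed

lemma stuffle_Nil2 [simp]: "stuffle xs [] = {#xs#}"
  by (cases xs) auto

lemma stuffle_Nil_count: "count (stuffle a b) [] = (if a = [] \<and> b = [] then 1 else 0)"
  by (cases a; cases b) (auto simp: count_image_cons_Nil)

lemma GG_stuffle:
  "is_comp \<gamma> \<Longrightarrow> is_comp a \<Longrightarrow> is_comp b \<Longrightarrow> count (GG \<gamma>) (a, b) = count (stuffle a b) \<gamma>"
proof (induct \<gamma> arbitrary: a b)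
  case Nil
  then show ?case by (simp add: stuffle_Nil_count)
next
  case (Cons c \<gamma>)
  have c: "0 < c" and g: "is_comp \<gamma>" using Cons(2) by auto
  let ?T = "\<lambda>i. count (image_mset (gi c i) (GG \<gamma>)) (a, b)"
  have split: "{..c} = insert 0 (insert c {1..<c})" using c by auto
  have "count (GG (c # \<gamma>)) (a, b) = (\<Sum>i\<in>{..c}. ?T i)"
    by (simp add: count_sum)
  also have "\<dots> = ?T 0 + ?T c + (\<Sum>i\<in>{1..<c}. ?T i)"
    unfolding split using c by (simp add: sum.insert)
  also have "(\<Sum>i\<in>{1..<c}. ?T i) = (\<Sum>i\<in>{1..<c}. if i = hd a then (if a \<noteq> [] \<and> b \<noteq> [] \<and> hd b = c - hd a then count (GG \<gamma>) (tl a, tl b) else 0) else 0)"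
    by (intro sum.cong refl) (auto simp: count_GG_gi[OF c])
  also have "\<dots> = (if hd a \<in> {1..<c} \<and> a \<noteq> [] \<and> b \<noteq> [] \<and> hd b = c - hd a then count (GG \<gamma>) (tl a, tl b) else 0)"
    by (simp add: sum.delta')
  finally have eq: "count (GG (c # \<gamma>)) (a, b) = ?T 0 + ?T c +
     (if hd a \<in> {1..<c} \<and> a \<noteq> [] \<and> b \<noteq> [] \<and> hd b = c - hd a then count (GG \<gamma>) (tl a, tl b) else 0)" .
  have T0: "?T 0 = (if b \<noteq> [] \<and> hd b = c then count (GG \<gamma>) (a, tl b) else 0)"
    using count_GG_gi[OF c, of 0] by simp
  have Tc: "?T c = (if a \<noteq> [] \<and> hd a = c then count (GG \<gamma>) (tl a, b) else 0)"
    using count_GG_gi[OF c, of c] c by simp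
  show ?case
  proof (cases a)
    case Nil
    show ?thesis
    proof (cases b)
      case Nil
      then show ?thesis using \<open>a = []\<close> eq T0 Tc by simp
    next
      case (Cons b1 b')
      then show ?thesis using \<open>a = []\<close> eq T0 Tc Cons.hyps[OF g, of "[]" b'] Cons.prems
        by (auto simp: count_image_cons)
    qed
  next
    case a: (Cons a1 a')
    show ?thesis
    proof (cases b)
      case Nil
      then show ?thesis using a eq T0 Tc Cons.hyps[OF g, of a' "[]"] Cons.prems
        by (auto simp: count_image_cons)
    next
      case b: (Cons b1 b')
      have ab: "0 < a1" "0 < b1" "is_comp a'" "is_comp b'" using a b Cons.prems by auto
      have i1: "count (GG \<gamma>) (a, b') = count (stuffle a b') \<gamma>" using Cons.hyps[OF g] a b Cons.prems by auto
      have i2: "count (GG \<gamma>) (a', b) = count (stuffle a' b) \<gamma>" using Cons.hyps[OF g] a b Cons.prems by auto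
      have i3: "count (GG \<gamma>) (a', b') = count (stuffle a' b') \<gamma>" using Cons.hyps[OF g] ab by auto
      have cnd: "(a1 \<in> {1..<c} \<and> b1 = c - a1) \<longleftrightarrow> a1 + b1 = c" using ab by auto
      show ?thesis unfolding eq T0 Tc using a b i1 i2 i3 cnd
        by (simp add: count_image_cons)
    qed
  qed
qed

lemma splits_iff: "\<beta> \<in> splits \<alpha> \<longleftrightarrow> length \<beta> = length \<alpha> \<and> (\<forall>j<length \<alpha>. \<beta> ! j \<le> \<alpha> ! j)"
proof (induct \<alpha> arbitrary: \<beta>)
  case Nil
  then show ?case by auto
next
  case (Cons a \<alpha>)
  show ?case
  proof (cases \<beta>)
    case Nil
    then show ?thesis by auto
  next
    case (Cons b v)
    have "\<beta> \<in> splits (a # \<alpha>) \<longleftrightarrow> b \<le> a \<and> v \<in> splits \<alpha>" using Cons by auto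
    then show ?thesis using Cons \<open>\<And>\<beta>. \<beta> \<in> splits \<alpha> \<longleftrightarrow> _\<close>[of v] by (auto simp: All_less_Suc2)
  qed
qed

lemma length_colsums [simp]: "length (colsums n A) = n"
  by (simp add: colsums_def)

lemma nth_colsums: "j < n \<Longrightarrow> colsums n A ! j = sum_list (map (\<lambda>r. r ! j) A)"
  by (simp add: colsums_def)

lemma nth_colsums_Cons: "j < n \<Longrightarrow> colsums n (r # A) ! j = r ! j + colsums n A ! j"
  by (simp add: nth_colsums)

lemma nth_colsums_Nil: "j < n \<Longrightarrow> colsums n [] ! j = 0"
  by (simp add: nth_colsums)

lemma mats_iff:
  "A \<in> mats \<alpha> \<gamma> \<longleftrightarrow> length A = length \<gamma> \<and> (\<forall>r\<in>set A. length r = length \<alpha>) \<and> map sum_list A = \<gamma>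
      \<and> colsums (length \<alpha>) A = \<alpha>"
proof (induct \<gamma> arbitrary: \<alpha> A)
  case Nil
  have "colsums (length \<alpha>) [] = \<alpha> \<longleftrightarrow> (\<forall>x\<in>set \<alpha>. x = 0)"
    by (auto simp: list_eq_iff_nth_eq nth_colsums_Nil in_set_conv_nth) (metis nth_mem)
  then show ?case by auto
next
  case (Cons c \<gamma>)
  show ?case
  proof
    assume "A \<in> mats \<alpha> (c # \<gamma>)"
    then obtain \<beta> A' where A: "A = \<beta> # A'" and b: "\<beta> \<in> splits \<alpha>" "sum_list \<beta> = c" and A': "A' \<in> mats (ldiff \<alpha> \<beta>) \<gamma>"
      by auto
    have lb: "length \<beta> = length \<alpha>" and le: "\<forall>j<length \<alpha>. \<beta> ! j \<le> \<alpha> ! j" using b(1) splits_iff by auto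
    have IH: "length A' = length \<gamma>" "\<forall>r\<in>set A'. length r = length \<alpha>" "map sum_list A' = \<gamma>"
       "colsums (length \<alpha>) A' = ldiff \<alpha> \<beta>"
      using Cons[of A' "ldiff \<alpha> \<beta>"] A' lb by auto
    have "colsums (length \<alpha>) A = \<alpha>"
      unfolding list_eq_iff_nth_eq
    proof (intro conjI allI impI)
      fix j assume j: "j < length (colsums (length \<alpha>) A)"
      then have j': "j < length \<alpha>" by simp
      have "colsums (length \<alpha>) A' ! j = \<alpha> ! j - \<beta> ! j" using IH(4) j' lb by simp
      then show "colsums (length \<alpha>) A ! j = \<alpha> ! j"
        using A nth_colsums_Cons[OF j'] le j' by simp
    qed simp
    then show "length A = length (c # \<gamma>) \<and> (\<forall>r\<in>set A. length r = length \<alpha>) \<and> map sum_list A = c # \<gamma>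
      \<and> colsums (length \<alpha>) A = \<alpha>"
      using A IH lb b by simp
  next
    assume h: "length A = length (c # \<gamma>) \<and> (\<forall>r\<in>set A. length r = length \<alpha>) \<and> map sum_list A = c # \<gamma>
      \<and> colsums (length \<alpha>) A = \<alpha>"
    then obtain r A' where A: "A = r # A'" by (cases A) auto
    have lr: "length r = length \<alpha>" and sr: "sum_list r = c" and lA': "length A' = length \<gamma>"
      and rA': "\<forall>r\<in>set A'. length r = length \<alpha>" and mA': "map sum_list A' = \<gamma>"
      using h A by auto
    have cs: "\<forall>j<length \<alpha>. r ! j + colsums (length \<alpha>) A' ! j = \<alpha> ! j"
      using h A nth_colsums_Cons by (metis)
    have rs: "r \<in> splits \<alpha>" unfolding splits_iff using lr cs by (metis le_add1)
    have "colsums (length \<alpha>) A' = ldiff \<alpha> r"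
      unfolding list_eq_iff_nth_eq using cs lr by auto
    then have "A' \<in> mats (ldiff \<alpha> r) \<gamma>"
      using Cons[of A' "ldiff \<alpha> r"] lA' rA' mA' lr by simp
    then show "A \<in> mats \<alpha> (c # \<gamma>)" using A rs sr by auto
  qed
qed

lemma red_mats_comp: "A \<in> red_mats \<alpha> \<gamma> \<Longrightarrow> is_comp \<alpha> \<and> is_comp \<gamma>"
proof -
  assume A: "A \<in> red_mats \<alpha> \<gamma>"
  then have red: "reduced_mat (length \<alpha>) A" and rs: "map sum_list A = \<gamma>" and cs: "colsums (length \<alpha>) A = \<alpha>"
    by (auto simp: red_mats_def)
  have "is_comp \<gamma>"
    unfolding is_comp_def
  proof
    fix x assume "x \<in> set \<gamma>"
    then obtain r where r: "r \<in> set A" "x = sum_list r" using rs by auto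
    then obtain y where "y \<in> set r" "y \<noteq> 0" using red by (auto simp: reduced_mat_def)
    then show "0 < x" using r member_le_sum_list[of y r] by auto
  qed
  moreover have "is_comp \<alpha>"
    unfolding is_comp_def
  proof
    fix x assume "x \<in> set \<alpha>"
    then obtain j where j: "j < length \<alpha>" "x = \<alpha> ! j" by (auto simp: in_set_conv_nth)
    then obtain r where r: "r \<in> set A" "r ! j \<noteq> 0" using red by (auto simp: reduced_mat_def)
    have "x = sum_list (map (\<lambda>r. r ! j) A)" using j cs nth_colsums[OF j(1), of A] by simp
    moreover have "r ! j \<le> sum_list (map (\<lambda>r. r ! j) A)" using r(1) by (intro member_le_sum_list) auto
    ultimately show "0 < x" using r by auto
  qed
  ultimately show ?thesis by simp
qed

lemma red_mats_eq: "is_comp \<alpha> \<Longrightarrow> is_comp \<gamma> \<Longrightarrow> red_mats \<alpha> \<gamma> = mats \<alpha> \<gamma>"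
proof (intro set_eqI iffI)
  fix A assume "A \<in> red_mats \<alpha> \<gamma>"
  then show "A \<in> mats \<alpha> \<gamma>" unfolding mats_iff red_mats_def reduced_mat_def by auto
next
  fix A assume ca: "is_comp \<alpha>" and cg: "is_comp \<gamma>" and A: "A \<in> mats \<alpha> \<gamma>"
  then have h: "length A = length \<gamma>" "\<forall>r\<in>set A. length r = length \<alpha>" "map sum_list A = \<gamma>"
      "colsums (length \<alpha>) A = \<alpha>" unfolding mats_iff by auto
  have "\<forall>r\<in>set A. \<exists>x\<in>set r. x \<noteq> 0"
  proof
    fix r assume r: "r \<in> set A"
    then have "sum_list r \<in> set \<gamma>" using h(3) by auto
    then have p: "0 < sum_list r" using cg unfolding is_comp_def by simp
    show "\<exists>x\<in>set r. x \<noteq> 0"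
    proof (rule ccontr)
      assume "\<not> (\<exists>x\<in>set r. x \<noteq> 0)"
      then have "sum_list r = 0" by simp
      then show False using p by (metis less_irrefl)
    qed
  qed
  moreover have "\<forall>j<length \<alpha>. \<exists>r\<in>set A. r ! j \<noteq> 0"
  proof (intro allI impI)
    fix j assume j: "j < length \<alpha>"
    then have "\<alpha> ! j \<noteq> 0" using ca by (auto simp: is_comp_def)
    moreover have "sum_list (map (\<lambda>r. r ! j) A) = \<alpha> ! j" using h(4) nth_colsums[OF j, of A] by simp
    ultimately have "sum_list (map (\<lambda>r. r ! j) A) \<noteq> 0" by simp
    show "\<exists>r\<in>set A. r ! j \<noteq> 0"
    proof (rule ccontr)
      assume "\<not> (\<exists>r\<in>set A. r ! j \<noteq> 0)"
      then have "sum_list (map (\<lambda>r. r ! j) A) = 0" by simp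
      then show False using \<open>sum_list (map (\<lambda>r. r ! j) A) \<noteq> 0\<close> by simp
    qed
  qed
  ultimately show "A \<in> red_mats \<alpha> \<gamma>" using h by (simp add: red_mats_def reduced_mat_def)
qed

lemma comp_length_le: "is_comp \<alpha> \<Longrightarrow> length \<alpha> \<le> sum_list \<alpha>"
  by (induct \<alpha>) (auto simp: is_comp_def)

lemma comps_fin: "finite {\<alpha>. is_comp \<alpha> \<and> sum_list \<alpha> \<le> n}"
proof (rule finite_subset)
  show "{\<alpha>. is_comp \<alpha> \<and> sum_list \<alpha> \<le> n} \<subseteq> {xs. set xs \<subseteq> {..n} \<and> length xs \<le> n}"
  proof (rule subsetI, rule CollectI, rule conjI)
    fix \<alpha> assume a: "\<alpha> \<in> {\<alpha>. is_comp \<alpha> \<and> sum_list \<alpha> \<le> n}"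
    then show "length \<alpha> \<le> n" using comp_length_le[of \<alpha>] by simp
    show "set \<alpha> \<subseteq> {..n}"
    proof
      fix x assume "x \<in> set \<alpha>"
      then have "x \<le> sum_list \<alpha>" by (intro member_le_sum_list) auto
      then show "x \<in> {..n}" using a by simp
    qed
  qed
  show "finite {xs. set xs \<subseteq> {..n} \<and> length xs \<le> n}" by (rule finite_lists_length_le) simp
qed

lemma stuffle_comp: "\<delta> \<in># stuffle a b \<Longrightarrow> is_comp a \<Longrightarrow> is_comp b \<Longrightarrow> is_comp \<delta>"
proof (induct a b arbitrary: \<delta> rule: stuffle.induct)
  case (1 ys) then show ?case by simp
next
  case (2 v va) then show ?case by simp
next
  case (3 x xs y ys)
  have cx: "0 < x" "is_comp xs" "0 < y" "is_comp ys" using 3(5,6) by auto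
  from 3(4) consider (a) d where "\<delta> = x # d" "d \<in># stuffle xs (y # ys)"
    | (b) d where "\<delta> = y # d" "d \<in># stuffle (x # xs) ys"
    | (c) d where "\<delta> = (x + y) # d" "d \<in># stuffle xs ys"
    unfolding stuffle.simps(3) by (auto simp only: union_iff image_iff set_image_mset)
  then show ?case
  proof cases
    case a then show ?thesis using 3(1)[OF a(2)] 3(6) cx by simp
  next
    case b then show ?thesis using 3(2)[OF b(2)] 3(5) cx by simp
  next
    case c then show ?thesis using 3(3)[OF c(2)] cx by simp
  qed
qed

lemma sum_count_mset:
  assumes "finite P" "set_mset M \<subseteq> P"
  shows "(\<Sum>p\<in>P. of_nat (count M p) * f p) = sum_mset (image_mset f M)"
  using assms(2)
proof (induct M)
  case empty
  then show ?case by simp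
next
  case (add x M)
  have x: "x \<in> P" using add by simp
  have "(\<Sum>p\<in>P. of_nat (count (add_mset x M) p) * f p) = (\<Sum>p\<in>P. of_nat (count M p) * f p + (if p = x then f p else 0))"
    by (intro sum.cong refl) (simp add: distrib_right add.commute)
  also have "\<dots> = (\<Sum>p\<in>P. of_nat (count M p) * f p) + f x"
    by (simp add: sum.distrib x assms(1))
  also have "\<dots> = sum_mset (image_mset f M) + f x" using add by simp
  also have "\<dots> = sum_mset (image_mset f (add_mset x M))" by (simp add: add.commute)
  finally show ?case .
qed

lemma perm_move:
  assumes sw: "\<And>p a b s. f (p @ a # b # s) = f (p @ b # a # s)"
  shows "f (p @ u @ b # v) = f (p @ b # u @ v)"
proof (induct u arbitrary: p)
  case (Cons x u)
  have "f (p @ (x # u) @ b # v) = f ((p @ [x]) @ u @ b # v)" by simp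
  also have "\<dots> = f ((p @ [x]) @ b # u @ v)" by (rule Cons)
  also have "\<dots> = f (p @ x # b # u @ v)" by simp
  also have "\<dots> = f (p @ b # x # u @ v)" by (rule sw)
  finally show ?case by simp
qed simp

lemma perm_inv:
  assumes sw: "\<And>p a b s. f (p @ a # b # s) = f (p @ b # a # s)"
  shows "mset \<alpha> = mset \<beta> \<Longrightarrow> f (p @ \<alpha>) = f (p @ \<beta>)"
proof (induct \<beta> arbitrary: \<alpha> p)
  case Nil
  then show ?case by simp
next
  case (Cons b \<beta>)
  have "b \<in> set \<alpha>" using Cons(2) by (metis list.set_intros(1) set_mset_mset)
  then obtain u v where a: "\<alpha> = u @ b # v" by (meson split_list)
  have m: "mset (u @ v) = mset \<beta>" using Cons(2) a by simp
  have "f (p @ \<alpha>) = f (p @ b # u @ v)" unfolding a by (rule perm_move[where f=f, OF sw])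
  also have "\<dots> = f ((p @ [b]) @ u @ v)" by simp
  also have "\<dots> = f ((p @ [b]) @ \<beta>)" by (rule Cons(1)[OF m])
  finally show ?case by simp
qed

context hctx
begin

abbreviation B :: "'h \<Rightarrow> nat list \<Rightarrow> 'h" where "B \<equiv> betaH sc Hn D e"

lemma B_comp: "is_comp \<alpha> \<Longrightarrow> B h \<alpha> = X \<alpha> h" by (simp add: betaH_def)
lemma B_ncomp: "\<not> is_comp \<alpha> \<Longrightarrow> B h \<alpha> = 0" by (simp add: betaH_def)

lemma X_vanish: "\<forall>n>N. proj Hn n h = 0 \<Longrightarrow> N < sum_list \<alpha> \<Longrightarrow> X \<alpha> h = 0"
proof -
  assume N: "\<forall>n>N. proj Hn n h = 0" and s: "N < sum_list \<alpha>"
  have "X \<alpha> h = (\<Sum>n\<le>N. X \<alpha> (proj Hn n h))"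
    using proj_sum_atMost[OF N] lin_sum[OF X_lin] by metis
  also have "\<dots> = 0" using s by (intro sum.neutral) (auto simp: X_proj)
  finally show ?thesis .
qed

lemma B_fin: "finite {\<alpha>. B h \<alpha> \<noteq> 0}"
proof -
  obtain N where N: "\<forall>n>N. proj Hn n h = 0" using proj_bound by blast
  have "{\<alpha>. B h \<alpha> \<noteq> 0} \<subseteq> {\<alpha>. is_comp \<alpha> \<and> sum_list \<alpha> \<le> N}"
  proof (rule subsetI)
    fix \<alpha> assume a: "\<alpha> \<in> {\<alpha>. B h \<alpha> \<noteq> 0}"
    then have c: "is_comp \<alpha>" using B_ncomp by auto
    have "\<not> N < sum_list \<alpha>" using a X_vanish[OF N] B_comp[OF c] by auto
    then show "\<alpha> \<in> {\<alpha>. is_comp \<alpha> \<and> sum_list \<alpha> \<le> N}" using c by simp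
  qed
  then show ?thesis using comps_fin finite_subset by blast
qed

lemma B_add: "B (x + y) = (\<lambda>\<alpha>. B x \<alpha> + B y \<alpha>)"
  by (simp add: fun_eq_iff betaH_def lin_add[OF X_lin])

lemma B_sc: "B (sc c x) = (\<lambda>\<alpha>. sc c (B x \<alpha>))"
  by (simp add: fun_eq_iff betaH_def lin_sc[OF X_lin])

lemma B_one: "B 1 = qone"
proof
  fix \<alpha>
  show "B 1 \<alpha> = qone \<alpha>"
  proof (cases "is_comp \<alpha>")
    case True
    have "(\<forall>x\<in>set \<alpha>. x = 0) \<longleftrightarrow> \<alpha> = []" using True by (cases \<alpha>) (auto simp: is_comp_def)
    then show ?thesis using True by (simp add: B_comp X_one qone_def)
  next
    case False
    then have "\<alpha> \<noteq> []" by auto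
    then show ?thesis using False by (simp add: B_ncomp qone_def)
  qed
qed

lemma qprod_B: "qprod (B x) (B y) \<gamma> = B (x * y) \<gamma>"
proof -
  let ?P = "{(\<alpha>, \<beta>). is_comp \<alpha> \<and> is_comp \<beta> \<and> sum_list \<alpha> + sum_list \<beta> = sum_list \<gamma>}"
  let ?C = "{\<alpha>. is_comp \<alpha> \<and> sum_list \<alpha> \<le> sum_list \<gamma>}"
  have finP: "finite ?P"
    by (rule finite_subset[of _ "?C \<times> ?C"]) (auto simp: comps_fin)
  show ?thesis
  proof (cases "is_comp \<gamma>")
    case True
    have "qprod (B x) (B y) \<gamma> = (\<Sum>p\<in>?P. of_nat (count (GG \<gamma>) p) * (X (fst p) x * X (snd p) y))"
      unfolding qprod_def
      by (intro sum.cong refl) (auto simp: B_comp GG_stuffle[OF True])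
    also have "\<dots> = sum_mset (image_mset (\<lambda>p. X (fst p) x * X (snd p) y) (GG \<gamma>))"
      by (rule sum_count_mset[OF finP]) (use GG_comp in force)
    also have "\<dots> = (\<Sum>\<beta>\<in>splits \<gamma>. X (filter (\<lambda>x. x \<noteq> 0) \<beta>) x * X (filter (\<lambda>x. x \<noteq> 0) (ldiff \<gamma> \<beta>)) y)"
      using GG_sum[where F = "\<lambda>p. X (fst p) x * X (snd p) y"] by simp
    also have "\<dots> = X \<gamma> (x * y)" unfolding X_filter X_mult ..
    finally show ?thesis using True by (simp add: B_comp)
  next
    case False
    have "qprod (B x) (B y) \<gamma> = 0"
      unfolding qprod_def
    proof (intro sum.neutral ballI)
      fix p assume p: "p \<in> ?P"
      then have "\<gamma> \<notin># stuffle (fst p) (snd p)" using stuffle_comp False by auto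
      then show "of_nat (count (stuffle (fst p) (snd p)) \<gamma>) * (B x (fst p) * B y (snd p)) = 0"
        by (simp add: not_in_iff)
    qed
    then show ?thesis using False by (simp add: B_ncomp)
  qed
qed

lemma B_mult: "B (x * y) = qprod (B x) (B y)"
  by (simp add: fun_eq_iff qprod_B)

lemma fsharp_LL: "fsharp sc f t \<alpha> = LL sc (\<lambda>q. fst q * f (snd q) \<alpha>) t"
  by (simp add: fsharp_def LL_def)

lemma fsharp2_LL: "fsharp2 sc f s p = LL sc (\<lambda>q. fst q * f (fst (snd q)) (fst p) * f (snd (snd q)) (snd p)) s"
  by (simp add: fsharp2_def LL_def)

lemma is_comp_append [simp]: "is_comp (a @ b) \<longleftrightarrow> is_comp a \<and> is_comp b"
  by (auto simp: is_comp_def)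

lemma B_coalg: "kH_coalg_hom sc D e B"
  unfolding kH_coalg_hom_def
proof (intro conjI allI)
  fix t
  show "qcomul (fsharp sc B t) = fsharp2 sc B (HH_comul D t)"
  proof
    fix p :: "nat list \<times> nat list"
    obtain \<alpha> \<gamma> where p: "p = (\<alpha>, \<gamma>)" by (cases p)
    show "qcomul (fsharp sc B t) p = fsharp2 sc B (HH_comul D t) p"
    proof (cases "is_comp \<alpha> \<and> is_comp \<gamma>")
      case True
      have "fsharp2 sc B (HH_comul D t) p = LL sc (\<lambda>q. fst q * LL sc (\<lambda>r. X \<alpha> (fst r) * X \<gamma> (snd r)) (D (snd q))) t"
        unfolding fsharp2_LL HH_comul_def LL_comul_right p
        by (intro LL_cong) (simp add: LL_mult_left B_comp True mult.assoc)
      also have "\<dots> = LL sc (\<lambda>q. fst q * B (snd q) (\<alpha> @ \<gamma>)) t"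
        by (intro LL_cong) (simp add: B_comp True X_append conv_def tlift2_LL)
      finally show ?thesis using True by (simp add: qcomul_def p fsharp_LL)
    next
      case False
      have "fsharp2 sc B (HH_comul D t) p = 0"
        unfolding fsharp2_LL HH_comul_def LL_comul_right p
        by (intro LL_zero_fun) (use False in \<open>auto simp: B_ncomp\<close>)
      moreover have "qcomul (fsharp sc B t) p = 0"
        unfolding qcomul_def p fst_conv snd_conv using False by (rule if_not_P)
      ultimately show ?thesis by simp
    qed
  qed
next
  fix t
  show "qcounit (fsharp sc B t) = HH_counit sc e t"
    unfolding qcounit_def HH_counit_def fsharp_LL tlift2_LL
    by (intro LL_cong) (simp add: B_comp sc_mult2[symmetric])
qed

lemma B_graded: "x \<in> Hn n \<Longrightarrow> sum_list \<alpha> \<noteq> n \<Longrightarrow> B x \<alpha> = 0"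
  by (simp add: betaH_def X_graded)

lemma B_eps: "qepsP (B h) = h"
proof -
  obtain N where N: "\<forall>n>N. proj Hn n h = 0" using proj_bound by blast
  let ?f = "\<lambda>\<alpha>. if length \<alpha> \<le> 1 then B h \<alpha> else 0"
  let ?S = "{\<alpha>. B h \<alpha> \<noteq> 0}"
  let ?T = "insert [] ((\<lambda>a. [a]) ` {1..N})"
  have fS: "finite ?S" by (rule B_fin)
  have fT: "finite ?T" by simp
  have "qepsP (B h) = sum ?f ?S" by (simp add: qepsP_def)
  also have "\<dots> = sum ?f (?S \<union> ?T)"
  proof (rule sum.mono_neutral_left)
    show "\<forall>i\<in>?S \<union> ?T - ?S. ?f i = 0"
    proof
      fix i assume "i \<in> ?S \<union> ?T - ?S"
      then have "B h i = 0" by simp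
      then show "?f i = 0" by simp
    qed
  qed (use fS fT in auto)
  also have "\<dots> = sum ?f ?T"
  proof (rule sum.mono_neutral_right)
    show "\<forall>i\<in>?S \<union> ?T - ?T. ?f i = 0"
    proof
      fix \<alpha> assume a: "\<alpha> \<in> ?S \<union> ?T - ?T"
      show "?f \<alpha> = 0"
      proof (cases "length \<alpha> \<le> 1")
        case True
        then consider "\<alpha> = []" | a where "\<alpha> = [a]" by (cases \<alpha>) auto
        then show ?thesis
        proof cases
          case 1 then show ?thesis using a by simp
        next
          case (2 a')
          have "\<alpha> \<in> ?S" using DiffD1[OF a] DiffD2[OF a] by (metis UnE)
          then have "B h \<alpha> \<noteq> 0" by simp
          then have cc: "is_comp \<alpha>" using B_ncomp by metis
          then have c: "0 < a'" using 2 by simp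
          have pa: "proj Hn a' h \<noteq> 0" using \<open>B h \<alpha> \<noteq> 0\<close> 2 cc by (simp add: B_comp)
          then have "a' \<le> N" using N by (meson not_le)
          then show ?thesis using a 2 c by auto
        qed
      qed simp
    qed
  qed (use fS fT in auto)
  also have "\<dots> = ?f [] + sum ?f ((\<lambda>a. [a]) ` {1..N})"
    by (rule sum.insert) auto
  also have "sum ?f ((\<lambda>a. [a]) ` {1..N}) = (\<Sum>a\<in>{1..N}. ?f [a])"
    by (rule sum.reindex[unfolded comp_def]) (simp add: inj_on_def)
  also have "?f [] + (\<Sum>a\<in>{1..N}. ?f [a]) = B h [] + (\<Sum>a\<in>{1..N}. B h [a])"
    by simp
  also have "\<dots> = proj Hn 0 h + (\<Sum>a\<in>{1..N}. proj Hn a h)"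
    by (simp add: B_comp proj0)
  also have "\<dots> = (\<Sum>a\<le>N. proj Hn a h)"
  proof -
    have "{..N} = insert 0 {1..N}" by auto
    then show ?thesis by simp
  qed
  also have "\<dots> = h" using proj_sum_atMost[OF N] by simp
  finally show ?thesis .
qed

lemma X_filter2: "X (filter ((<) 0) w) = X w"
proof -
  have "filter ((<) 0) w = filter (\<lambda>x. x \<noteq> 0) w" by (induct w) auto
  then show ?thesis using X_filter by simp
qed

lemma B_B: "B (B h \<gamma>) \<alpha> = qDeltaP' (B h) (\<alpha>, \<gamma>)"
proof (cases "is_comp \<alpha> \<and> is_comp \<gamma>")
  case True
  have "qDeltaP' (B h) (\<alpha>, \<gamma>) = (\<Sum>A\<in>mats \<alpha> \<gamma>. X (concat A) h)"
    unfolding qDeltaP'_def using True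
    by (simp add: red_mats_eq B_comp is_comp_def X_filter X_filter2)
  then show ?thesis using True by (simp add: B_comp X_X)
next
  case False
  have "red_mats \<alpha> \<gamma> = {}" using red_mats_comp False by blast
  then have "qDeltaP' (B h) (\<alpha>, \<gamma>) = 0" by (simp add: qDeltaP'_def)
  moreover have "B (B h \<gamma>) \<alpha> = 0"
  proof (cases "is_comp \<alpha>")
    case True
    then have "\<not> is_comp \<gamma>" using False by simp
    then show ?thesis using True by (simp add: B_ncomp B_comp lin_zero[OF X_lin])
  qed (simp add: B_ncomp)
  ultimately show ?thesis by simp
qed

lemma LL_tswap: "LL sc b (tswap2 t) = LL sc (\<lambda>q. b (snd q, fst q)) t"
  unfolding tswap2_def LL_sum LL_single by (simp add: LL_def)

lemma conv_comm:
  assumes cc: "cocommutative sc D" and f: "klinear sc f" and g: "klinear sc g"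
  shows "conv sc D f g x = conv sc D g f x"
proof -
  have "conv sc D f g x = tlift2 sc (\<lambda>a b. f a * g b) (tswap2 (D x))"
    unfolding conv_def
    by (rule tl_teq[OF bil_prod[OF f g], symmetric]) (use cc in \<open>simp add: cocommutative_def\<close>)
  also have "\<dots> = conv sc D g f x"
    unfolding conv_def tlift2_LL LL_tswap by (simp add: mult.commute)
  finally show ?thesis .
qed

lemma X_swap:
  assumes cc: "cocommutative sc D"
  shows "X (p @ a # b # s) = X (p @ b # a # s)"
proof -
  have abf: "conv sc D (proj Hn a) (proj Hn b) = conv sc D (proj Hn b) (proj Hn a)"
    by (simp add: fun_eq_iff conv_comm[OF cc proj_lin proj_lin])
  have 1: "X (a # b # s) x = conv sc D (conv sc D (proj Hn a) (proj Hn b)) (X s) x" for x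
    using X_append[of "[a, b]" s] by simp
  have 2: "X (b # a # s) x = conv sc D (conv sc D (proj Hn b) (proj Hn a)) (X s) x" for x
    using X_append[of "[b, a]" s] by simp
  have eq: "X (a # b # s) = X (b # a # s)"
    unfolding fun_eq_iff 1 2 abf by simp
  show ?thesis by (simp only: fun_eq_iff X_append eq) simp
qed

lemma B_Lambda: "cocommutative sc D \<Longrightarrow> in_H_Lambda (B h)"
proof -
  assume cc: "cocommutative sc D"
  have perm: "mset \<alpha> = mset \<beta> \<Longrightarrow> X ([] @ \<alpha>) = X ([] @ \<beta>)" for \<alpha> \<beta>
    by (rule perm_inv[where f = X]) (rule X_swap[OF cc])
  show ?thesis unfolding in_H_Lambda_def
  proof (intro exI allI impI)
    fix \<alpha> :: "nat list" assume c: "is_comp \<alpha>"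
    have "X \<alpha> = X (sorted_list_of_multiset (mset \<alpha>))" using perm[of \<alpha> "sorted_list_of_multiset (mset \<alpha>)"] by simp
    then show "B h \<alpha> = (\<lambda>m. X (sorted_list_of_multiset m) h) (mset \<alpha>)" using c by (simp add: B_comp)
  qed
qed

lemma main:
  shows "(\<forall>h. finite {\<alpha>. betaH sc Hn D e h \<alpha> \<noteq> 0})
    \<and> ((\<forall>x y. betaH sc Hn D e (x + y) = (\<lambda>\<alpha>. betaH sc Hn D e x \<alpha> + betaH sc Hn D e y \<alpha>))
       \<and> (\<forall>c x. betaH sc Hn D e (sc c x) = (\<lambda>\<alpha>. sc c (betaH sc Hn D e x \<alpha>)))
       \<and> (\<forall>x y. betaH sc Hn D e (x * y) = qprod (betaH sc Hn D e x) (betaH sc Hn D e y))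
       \<and> betaH sc Hn D e 1 = qone
       \<and> kH_coalg_hom sc D e (betaH sc Hn D e)
       \<and> (\<forall>n x \<alpha>. x \<in> Hn n \<longrightarrow> sum_list \<alpha> \<noteq> n \<longrightarrow> betaH sc Hn D e x \<alpha> = 0))
    \<and> (\<forall>h. qepsP (betaH sc Hn D e h) = h)
    \<and> (\<forall>h \<alpha> \<gamma>. betaH sc Hn D e (betaH sc Hn D e h \<gamma>) \<alpha> = qDeltaP' (betaH sc Hn D e h) (\<alpha>, \<gamma>))
    \<and> (cocommutative sc D \<longrightarrow> (\<forall>h. in_H_Lambda (betaH sc Hn D e h)))"
  using B_fin B_add B_sc B_mult B_one B_coalg B_graded B_eps B_B B_Lambda by blast

end

theorem theorem5p7:
  fixes sc :: "'k::comm_ring_1 \<Rightarrow> 'h::comm_ring_1 \<Rightarrow> 'h"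
    and Hn :: "nat \<Rightarrow> 'h set"
    and D :: "'h \<Rightarrow> ('h \<times> 'h) \<Rightarrow>\<^sub>0 'k"
    and e :: "'h \<Rightarrow> 'k"
  assumes H: "comm_conn_graded_hopf sc Hn D e"
  shows "(\<forall>h. finite {\<alpha>. betaH sc Hn D e h \<alpha> \<noteq> 0})
    \<and> ((\<forall>x y. betaH sc Hn D e (x + y) = (\<lambda>\<alpha>. betaH sc Hn D e x \<alpha> + betaH sc Hn D e y \<alpha>))
       \<and> (\<forall>c x. betaH sc Hn D e (sc c x) = (\<lambda>\<alpha>. sc c (betaH sc Hn D e x \<alpha>)))
       \<and> (\<forall>x y. betaH sc Hn D e (x * y) = qprod (betaH sc Hn D e x) (betaH sc Hn D e y))
       \<and> betaH sc Hn D e 1 = qone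
       \<and> kH_coalg_hom sc D e (betaH sc Hn D e)
       \<and> (\<forall>n x \<alpha>. x \<in> Hn n \<longrightarrow> sum_list \<alpha> \<noteq> n \<longrightarrow> betaH sc Hn D e x \<alpha> = 0))
    \<and> (\<forall>h. qepsP (betaH sc Hn D e h) = h)
    \<and> (\<forall>h \<alpha> \<gamma>. betaH sc Hn D e (betaH sc Hn D e h \<gamma>) \<alpha> = qDeltaP' (betaH sc Hn D e h) (\<alpha>, \<gamma>))
    \<and> (cocommutative sc D \<longrightarrow> (\<forall>h. in_H_Lambda (betaH sc Hn D e h)))"
proof -
  interpret hctx sc Hn D e by (rule hctx.intro) (rule H)
  show ?thesis by (rule main)
qed


end
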